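(* For every integer $n\geqslant 9$, the Pancake graph $P_n$ satisfies $$\chi(P_n)\leqslant 4\left\lfloor\frac n9\right\rfloor+\chi\left(P_{n \bmod 9}\right),$$ where $n \bmod 9\in\{0,1,\ldots,8\}$ and the conventions $\chi(P_0)=0$ and $\chi(P_1)=1$ are used.
   Context: For $n\geqslant 1$, the Pancake graph $P_n$ is the Cayley graph on the symmetric group $\mathrm{Sym}_n$, with permutations written in one-line notation $\pi=[\pi_1\pi_2\ldots\pi_n]$. Its generating set consists of the prefix-reversals $r_i$, $2\leqslant i\leqslant n$. Multiplying $\pi$ on the right by $r_i$ reverses the first $i$ entries: $\pi r_i=[\pi_i\pi_{i-1}\ldots\pi_1\pi_{i+1}\ldots\pi_n]$. Two vertices $\pi,\sigma$ are adjacent iff $\sigma=\pi r_i$ for some $2\leqslant i\leqslant n$. In particular $P_1$ is a single vertex. $\chi$ denotes the chromatic number. The paper uses that $\chi(P_9)=4$. *)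

theory Defs
  imports Main
begin

definition pancake_vertices :: "nat \<Rightarrow> nat list set" where
  "pancake_vertices n = {xs. distinct xs \<and> set xs = {1..n}}"

definition prefix_rev :: "nat \<Rightarrow> 'a list \<Rightarrow> 'a list" where
  "prefix_rev i xs = rev (take i xs) @ drop i xs"

definition pancake_adj :: "nat \<Rightarrow> nat list \<Rightarrow> nat list \<Rightarrow> bool" where
  "pancake_adj n p q \<longleftrightarrow> (\<exists>i. 2 \<le> i \<and> i \<le> n \<and> q = prefix_rev i p)"

definition proper_colouring :: "'a set \<Rightarrow> ('a \<Rightarrow> 'a \<Rightarrow> bool) \<Rightarrow> nat \<Rightarrow> ('a \<Rightarrow> nat) \<Rightarrow> bool" where
  "proper_colouring V E k c \<longleftrightarrow>
     (\<forall>v\<in>V. c v < k) \<and> (\<forall>u\<in>V. \<forall>v\<in>V. E u v \<longrightarrow> c u \<noteq> c v)"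

definition chromatic_number :: "'a set \<Rightarrow> ('a \<Rightarrow> 'a \<Rightarrow> bool) \<Rightarrow> nat" where
  "chromatic_number V E = (LEAST k. \<exists>c. proper_colouring V E k c)"

definition pancake_chi :: "nat \<Rightarrow> nat" where
  "pancake_chi n = (if n = 0 then 0 else chromatic_number (pancake_vertices n) (pancake_adj n))"

end

theory Submission
  imports Defs
begin

datatype d = D1 | D2 | D3 | D4 | D5 | D6 | D7 | D8 | D9

datatype col = C0 | C1 | C2 | C3

fun Nc :: "col \<Rightarrow> d \<Rightarrow> d" where
  "Nc C0 D1 = D2"
| "Nc C0 D2 = D3"
| "Nc C0 D3 = D1"
| "Nc C0 D4 = D5"
| "Nc C0 D5 = D6"
| "Nc C0 D6 = D4"
| "Nc C0 D7 = D8"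
| "Nc C0 D8 = D9"
| "Nc C0 D9 = D7"
| "Nc C1 D1 = D2"
| "Nc C1 D2 = D3"
| "Nc C1 D3 = D1"
| "Nc C1 D4 = D6"
| "Nc C1 D5 = D4"
| "Nc C1 D6 = D5"
| "Nc C1 D7 = D9"
| "Nc C1 D8 = D7"
| "Nc C1 D9 = D8"
| "Nc C2 D1 = D3"
| "Nc C2 D2 = D1"
| "Nc C2 D3 = D2"
| "Nc C2 D4 = D5"
| "Nc C2 D5 = D6"
| "Nc C2 D6 = D4"
| "Nc C2 D7 = D9"
| "Nc C2 D8 = D7"
| "Nc C2 D9 = D8"
| "Nc C3 D1 = D3"
| "Nc C3 D2 = D1"
| "Nc C3 D3 = D2"
| "Nc C3 D4 = D6"
| "Nc C3 D5 = D4"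
| "Nc C3 D6 = D5"
| "Nc C3 D7 = D8"
| "Nc C3 D8 = D9"
| "Nc C3 D9 = D7"

fun ea1 :: "d \<Rightarrow> d" where
  "ea1 D1 = D1"
| "ea1 D2 = D2"
| "ea1 D3 = D3"
| "ea1 D4 = D4"
| "ea1 D5 = D5"
| "ea1 D6 = D6"
| "ea1 D7 = D7"
| "ea1 D8 = D8"
| "ea1 D9 = D9"

fun cea1 :: "col \<Rightarrow> col" where
  "cea1 C0 = C0"
| "cea1 C1 = C1"
| "cea1 C2 = C2"
| "cea1 C3 = C3"

fun ea2 :: "d \<Rightarrow> d" where
  "ea2 D1 = D3"
| "ea2 D2 = D1"
| "ea2 D3 = D2"
| "ea2 D4 = D4"
| "ea2 D5 = D5"
| "ea2 D6 = D6"
| "ea2 D7 = D7"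
| "ea2 D8 = D8"
| "ea2 D9 = D9"

fun cea2 :: "col \<Rightarrow> col" where
  "cea2 C0 = C0"
| "cea2 C1 = C1"
| "cea2 C2 = C2"
| "cea2 C3 = C3"

fun ea3 :: "d \<Rightarrow> d" where
  "ea3 D1 = D2"
| "ea3 D2 = D3"
| "ea3 D3 = D1"
| "ea3 D4 = D4"
| "ea3 D5 = D5"
| "ea3 D6 = D6"
| "ea3 D7 = D7"
| "ea3 D8 = D8"
| "ea3 D9 = D9"

fun cea3 :: "col \<Rightarrow> col" where
  "cea3 C0 = C0"
| "cea3 C1 = C1"
| "cea3 C2 = C2"
| "cea3 C3 = C3"

fun ea4 :: "d \<Rightarrow> d" where
  "ea4 D1 = D4"
| "ea4 D2 = D5"
| "ea4 D3 = D6"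
| "ea4 D4 = D1"
| "ea4 D5 = D2"
| "ea4 D6 = D3"
| "ea4 D7 = D7"
| "ea4 D8 = D8"
| "ea4 D9 = D9"

fun cea4 :: "col \<Rightarrow> col" where
  "cea4 C0 = C0"
| "cea4 C1 = C2"
| "cea4 C2 = C1"
| "cea4 C3 = C3"

fun ea5 :: "d \<Rightarrow> d" where
  "ea5 D1 = D4"
| "ea5 D2 = D5"
| "ea5 D3 = D6"
| "ea5 D4 = D3"
| "ea5 D5 = D1"
| "ea5 D6 = D2"
| "ea5 D7 = D7"
| "ea5 D8 = D8"
| "ea5 D9 = D9"

fun cea5 :: "col \<Rightarrow> col" where
  "cea5 C0 = C0"
| "cea5 C1 = C2"
| "cea5 C2 = C1"
| "cea5 C3 = C3"

fun ea6 :: "d \<Rightarrow> d" where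
  "ea6 D1 = D4"
| "ea6 D2 = D5"
| "ea6 D3 = D6"
| "ea6 D4 = D2"
| "ea6 D5 = D3"
| "ea6 D6 = D1"
| "ea6 D7 = D7"
| "ea6 D8 = D8"
| "ea6 D9 = D9"

fun cea6 :: "col \<Rightarrow> col" where
  "cea6 C0 = C0"
| "cea6 C1 = C2"
| "cea6 C2 = C1"
| "cea6 C3 = C3"

fun ea7 :: "d \<Rightarrow> d" where
  "ea7 D1 = D7"
| "ea7 D2 = D8"
| "ea7 D3 = D9"
| "ea7 D4 = D4"
| "ea7 D5 = D5"
| "ea7 D6 = D6"
| "ea7 D7 = D1"
| "ea7 D8 = D2"
| "ea7 D9 = D3"

fun cea7 :: "col \<Rightarrow> col" where
  "cea7 C0 = C0"
| "cea7 C1 = C3"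
| "cea7 C2 = C2"
| "cea7 C3 = C1"

fun ea8 :: "d \<Rightarrow> d" where
  "ea8 D1 = D7"
| "ea8 D2 = D8"
| "ea8 D3 = D9"
| "ea8 D4 = D4"
| "ea8 D5 = D5"
| "ea8 D6 = D6"
| "ea8 D7 = D3"
| "ea8 D8 = D1"
| "ea8 D9 = D2"

fun cea8 :: "col \<Rightarrow> col" where
  "cea8 C0 = C0"
| "cea8 C1 = C3"
| "cea8 C2 = C2"
| "cea8 C3 = C1"

fun ea9 :: "d \<Rightarrow> d" where
  "ea9 D1 = D7"
| "ea9 D2 = D8"
| "ea9 D3 = D9"
| "ea9 D4 = D4"
| "ea9 D5 = D5"
| "ea9 D6 = D6"
| "ea9 D7 = D2"
| "ea9 D8 = D3"
| "ea9 D9 = D1"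

fun cea9 :: "col \<Rightarrow> col" where
  "cea9 C0 = C0"
| "cea9 C1 = C3"
| "cea9 C2 = C2"
| "cea9 C3 = C1"

fun eb :: "d \<Rightarrow> d" where
  "eb D1 = D1"
| "eb D2 = D3"
| "eb D3 = D2"
| "eb D4 = D4"
| "eb D5 = D5"
| "eb D6 = D6"
| "eb D7 = D7"
| "eb D8 = D9"
| "eb D9 = D8"

fun ceb :: "col \<Rightarrow> col" where
  "ceb C0 = C2"
| "ceb C1 = C3"
| "ceb C2 = C0"
| "ceb C3 = C1"

fun ec4 :: "d \<Rightarrow> d" where
  "ec4 D1 = D1"
| "ec4 D2 = D2"
| "ec4 D3 = D3"
| "ec4 D4 = D4"
| "ec4 D5 = D5"
| "ec4 D6 = D6"
| "ec4 D7 = D7"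
| "ec4 D8 = D8"
| "ec4 D9 = D9"

fun cec4 :: "col \<Rightarrow> col" where
  "cec4 C0 = C0"
| "cec4 C1 = C1"
| "cec4 C2 = C2"
| "cec4 C3 = C3"

fun ec5 :: "d \<Rightarrow> d" where
  "ec5 D1 = D1"
| "ec5 D2 = D2"
| "ec5 D3 = D3"
| "ec5 D4 = D6"
| "ec5 D5 = D4"
| "ec5 D6 = D5"
| "ec5 D7 = D7"
| "ec5 D8 = D8"
| "ec5 D9 = D9"

fun cec5 :: "col \<Rightarrow> col" where
  "cec5 C0 = C0"
| "cec5 C1 = C1"
| "cec5 C2 = C2"
| "cec5 C3 = C3"

fun ec6 :: "d \<Rightarrow> d" where
  "ec6 D1 = D1"
| "ec6 D2 = D2"
| "ec6 D3 = D3"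
| "ec6 D4 = D5"
| "ec6 D5 = D6"
| "ec6 D6 = D4"
| "ec6 D7 = D7"
| "ec6 D8 = D8"
| "ec6 D9 = D9"

fun cec6 :: "col \<Rightarrow> col" where
  "cec6 C0 = C0"
| "cec6 C1 = C1"
| "cec6 C2 = C2"
| "cec6 C3 = C3"

fun ec7 :: "d \<Rightarrow> d" where
  "ec7 D1 = D1"
| "ec7 D2 = D2"
| "ec7 D3 = D3"
| "ec7 D4 = D7"
| "ec7 D5 = D8"
| "ec7 D6 = D9"
| "ec7 D7 = D4"
| "ec7 D8 = D5"
| "ec7 D9 = D6"

fun cec7 :: "col \<Rightarrow> col" where
  "cec7 C0 = C0"
| "cec7 C1 = C1"
| "cec7 C2 = C3"
| "cec7 C3 = C2"

fun ec8 :: "d \<Rightarrow> d" where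
  "ec8 D1 = D1"
| "ec8 D2 = D2"
| "ec8 D3 = D3"
| "ec8 D4 = D7"
| "ec8 D5 = D8"
| "ec8 D6 = D9"
| "ec8 D7 = D6"
| "ec8 D8 = D4"
| "ec8 D9 = D5"

fun cec8 :: "col \<Rightarrow> col" where
  "cec8 C0 = C0"
| "cec8 C1 = C1"
| "cec8 C2 = C3"
| "cec8 C3 = C2"

fun ec9 :: "d \<Rightarrow> d" where
  "ec9 D1 = D1"
| "ec9 D2 = D2"
| "ec9 D3 = D3"
| "ec9 D4 = D7"
| "ec9 D5 = D8"
| "ec9 D6 = D9"
| "ec9 D7 = D5"
| "ec9 D8 = D6"
| "ec9 D9 = D4"

fun cec9 :: "col \<Rightarrow> col" where
  "cec9 C0 = C0"
| "cec9 C1 = C1"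
| "cec9 C2 = C3"
| "cec9 C3 = C2"

fun ed7 :: "d \<Rightarrow> d" where
  "ed7 D1 = D1"
| "ed7 D2 = D2"
| "ed7 D3 = D3"
| "ed7 D4 = D4"
| "ed7 D5 = D5"
| "ed7 D6 = D6"
| "ed7 D7 = D7"
| "ed7 D8 = D8"
| "ed7 D9 = D9"

fun ced7 :: "col \<Rightarrow> col" where
  "ced7 C0 = C0"
| "ced7 C1 = C1"
| "ced7 C2 = C2"
| "ced7 C3 = C3"

fun ed8 :: "d \<Rightarrow> d" where
  "ed8 D1 = D1"
| "ed8 D2 = D2"
| "ed8 D3 = D3"
| "ed8 D4 = D4"
| "ed8 D5 = D5"
| "ed8 D6 = D6"
| "ed8 D7 = D9"
| "ed8 D8 = D7"
| "ed8 D9 = D8"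

fun ced8 :: "col \<Rightarrow> col" where
  "ced8 C0 = C0"
| "ced8 C1 = C1"
| "ced8 C2 = C2"
| "ced8 C3 = C3"

fun ed9 :: "d \<Rightarrow> d" where
  "ed9 D1 = D1"
| "ed9 D2 = D2"
| "ed9 D3 = D3"
| "ed9 D4 = D4"
| "ed9 D5 = D5"
| "ed9 D6 = D6"
| "ed9 D7 = D8"
| "ed9 D8 = D9"
| "ed9 D9 = D7"

fun ced9 :: "col \<Rightarrow> col" where
  "ced9 C0 = C0"
| "ced9 C1 = C1"
| "ced9 C2 = C2"
| "ced9 C3 = C3"

fun ee :: "d \<Rightarrow> d" where
  "ee D1 = D1"
| "ee D2 = D2"
| "ee D3 = D3"
| "ee D4 = D4"
| "ee D5 = D6"
| "ee D6 = D5"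
| "ee D7 = D7"
| "ee D8 = D9"
| "ee D9 = D8"

fun cee :: "col \<Rightarrow> col" where
  "cee C0 = C1"
| "cee C1 = C0"
| "cee C2 = C3"
| "cee C3 = C2"

lemma UNIV_d: "(UNIV :: d set) = {D1,D2,D3,D4,D5,D6,D7,D8,D9}"
proof -
  { fix x :: d have "x \<in> {D1,D2,D3,D4,D5,D6,D7,D8,D9}" by (cases x) auto }
  thus ?thesis by auto
qed

lemma UNIV_col: "(UNIV :: col set) = {C0,C1,C2,C3}"
proof -
  { fix x :: col have "x \<in> {C0,C1,C2,C3}" by (cases x) auto }
  thus ?thesis by auto
qed

lemma finite_d: "finite (UNIV :: d set)" by (simp add: UNIV_d)
lemma finite_col: "finite (UNIV :: col set)" by (simp add: UNIV_col)

definition inG :: "(d \<Rightarrow> d) \<Rightarrow> bool" where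
  "inG m \<longleftrightarrow> bij m \<and> (\<forall>c. \<exists>c'. \<forall>x. m (Nc c x) = Nc c' (m x))"

definition psi :: "(d \<Rightarrow> d) \<Rightarrow> col \<Rightarrow> col" where
  "psi m c = (THE c'. \<forall>x. m (Nc c x) = Nc c' (m x))"

lemma Nc_inj: "(\<forall>x. Nc c1 x = Nc c2 x) \<Longrightarrow> c1 = c2"
  by (cases c1; cases c2) (auto dest: spec[of _ D1] spec[of _ D4])

lemma psi_unique:
  assumes "surj m" "\<forall>x. m (Nc c x) = Nc c1 (m x)" "\<forall>x. m (Nc c x) = Nc c2 (m x)"
  shows "c1 = c2"
proof -
  have "\<forall>y. Nc c1 y = Nc c2 y"
  proof
    fix y
    obtain x where "y = m x" using assms(1) by (metis surjD)
    then show "Nc c1 y = Nc c2 y" using assms(2,3) by metis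
  qed
  thus ?thesis by (rule Nc_inj)
qed

lemma psi_prop: assumes "inG m" shows "m (Nc c x) = Nc (psi m c) (m x)"
proof -
  from assms obtain c' where c': "\<forall>x. m (Nc c x) = Nc c' (m x)" and b: "bij m"
    unfolding inG_def by blast
  have "psi m c = c'" unfolding psi_def
  proof (rule the_equality)
    show "\<forall>x. m (Nc c x) = Nc c' (m x)" by (rule c')
  next
    fix c2 assume "\<forall>x. m (Nc c x) = Nc c2 (m x)"
    then show "c2 = c'" using psi_unique[OF bij_is_surj[OF b] _ c'] by blast
  qed
  with c' show ?thesis by simp
qed

lemma psi_eq: assumes "inG m" "\<forall>x. m (Nc c x) = Nc c' (m x)" shows "psi m c = c'"
proof -
  have "\<forall>x. m (Nc c x) = Nc (psi m c) (m x)" using psi_prop[OF assms(1)] by blast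
  moreover have "surj m" using assms(1) unfolding inG_def by (simp add: bij_is_surj)
  ultimately show ?thesis using psi_unique assms(2) by blast
qed

lemma inG_comp: assumes "inG a" "inG b" shows "inG (a \<circ> b)"
proof -
  have "bij (a \<circ> b)" using assms unfolding inG_def by (simp add: bij_comp)
  moreover have "\<forall>c. \<exists>c'. \<forall>x. (a \<circ> b) (Nc c x) = Nc c' ((a \<circ> b) x)"
    using psi_prop[OF assms(1)] psi_prop[OF assms(2)] by auto
  ultimately show ?thesis unfolding inG_def by blast
qed

lemma psi_comp: assumes "inG a" "inG b" shows "psi (a \<circ> b) c = psi a (psi b c)"
  using psi_eq[OF inG_comp[OF assms]] psi_prop[OF assms(1)] psi_prop[OF assms(2)] by auto

lemma inG_id: "inG id"
  unfolding inG_def by auto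

lemma psi_id: "psi id c = c"
  using psi_eq[OF inG_id, of c c] by simp

lemma inG_inv: assumes "inG m" shows "inG (inv m)"
proof -
  have b: "bij m" using assms unfolding inG_def by blast
  have "inj (psi m)"
  proof (rule injI)
    fix c1 c2 assume "psi m c1 = psi m c2"
    then have "\<forall>x. m (Nc c1 x) = m (Nc c2 x)" using psi_prop[OF assms] by metis
    then have "\<forall>x. Nc c1 x = Nc c2 x" using bij_is_inj[OF b] by (meson injD)
    then show "c1 = c2" by (rule Nc_inj)
  qed
  then have s: "surj (psi m)" using finite_UNIV_inj_surj finite_col by blast
  have "\<forall>c. \<exists>c'. \<forall>x. inv m (Nc c x) = Nc c' (inv m x)"
  proof
    fix c
    obtain c'' where c'': "psi m c'' = c" using s by (metis surjD)
    have "\<forall>x. inv m (Nc c x) = Nc c'' (inv m x)"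
    proof
      fix x
      have "m (Nc c'' (inv m x)) = Nc c (m (inv m x))" using psi_prop[OF assms] c'' by metis
      also have "\<dots> = Nc c x" using bij_is_surj[OF b] by (simp add: surj_f_inv_f)
      finally have "inv m (m (Nc c'' (inv m x))) = inv m (Nc c x)" by simp
      then show "inv m (Nc c x) = Nc c'' (inv m x)" using bij_is_inj[OF b] by (simp add: inv_f_f)
    qed
    then show "\<exists>c'. \<forall>x. inv m (Nc c x) = Nc c' (inv m x)" by blast
  qed
  moreover have "bij (inv m)" using b by (simp add: bij_imp_bij_inv)
  ultimately show ?thesis unfolding inG_def by blast
qed

lemma gen_G:
  assumes "\<And>c x. f (Nc c x) = Nc (g c) (f x)" "\<And>x y. f x = f y \<Longrightarrow> x = y"
  shows "inG f \<and> psi f = g"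
proof -
  have i: "inj f" using assms(2) by (auto intro: injI)
  then have "surj f" using finite_UNIV_inj_surj finite_d by blast
  with i have b: "bij f" by (simp add: bij_def)
  have "inG f" unfolding inG_def using b assms(1) by blast
  moreover have "psi f = g" using psi_eq[OF \<open>inG f\<close>] assms(1) by (auto intro!: ext)
  ultimately show ?thesis by blast
qed

definition EA :: "d \<Rightarrow> d \<Rightarrow> d" where
  "EA v = (case v of D1 \<Rightarrow> ea1 | D2 \<Rightarrow> ea2 | D3 \<Rightarrow> ea3 | D4 \<Rightarrow> ea4 | D5 \<Rightarrow> ea5 | D6 \<Rightarrow> ea6 | D7 \<Rightarrow> ea7 | D8 \<Rightarrow> ea8 | D9 \<Rightarrow> ea9)"
definition CEA :: "d \<Rightarrow> col \<Rightarrow> col" where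
  "CEA v = (case v of D1 \<Rightarrow> cea1 | D2 \<Rightarrow> cea2 | D3 \<Rightarrow> cea3 | D4 \<Rightarrow> cea4 | D5 \<Rightarrow> cea5 | D6 \<Rightarrow> cea6 | D7 \<Rightarrow> cea7 | D8 \<Rightarrow> cea8 | D9 \<Rightarrow> cea9)"
definition EC :: "d \<Rightarrow> d \<Rightarrow> d" where
  "EC v = (case v of D4 \<Rightarrow> ec4 | D5 \<Rightarrow> ec5 | D6 \<Rightarrow> ec6 | D7 \<Rightarrow> ec7 | D8 \<Rightarrow> ec8 | D9 \<Rightarrow> ec9 | _ \<Rightarrow> id)"
definition CEC :: "d \<Rightarrow> col \<Rightarrow> col" where
  "CEC v = (case v of D4 \<Rightarrow> cec4 | D5 \<Rightarrow> cec5 | D6 \<Rightarrow> cec6 | D7 \<Rightarrow> cec7 | D8 \<Rightarrow> cec8 | D9 \<Rightarrow> cec9 | _ \<Rightarrow> id)"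
definition ED :: "d \<Rightarrow> d \<Rightarrow> d" where
  "ED v = (case v of D7 \<Rightarrow> ed7 | D8 \<Rightarrow> ed8 | D9 \<Rightarrow> ed9 | _ \<Rightarrow> id)"
definition CED :: "d \<Rightarrow> col \<Rightarrow> col" where
  "CED v = (case v of D7 \<Rightarrow> ced7 | D8 \<Rightarrow> ced8 | D9 \<Rightarrow> ced9 | _ \<Rightarrow> id)"

lemma G_EA: "inG (EA a) \<and> psi (EA a) = CEA a"
proof (rule gen_G)
  fix c x show "EA a (Nc c x) = Nc (CEA a c) (EA a x)"
    by (cases a; cases c; cases x) (simp_all add: EA_def CEA_def)
next
  fix x y assume "EA a x = EA a y" then show "x = y"
    by (cases a; cases x; cases y) (simp_all add: EA_def)
qed

lemma G_EC: "inG (EC a) \<and> psi (EC a) = CEC a"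
proof (rule gen_G)
  fix c x show "EC a (Nc c x) = Nc (CEC a c) (EC a x)"
    by (cases a; cases c; cases x) (simp_all add: EC_def CEC_def)
next
  fix x y assume "EC a x = EC a y" then show "x = y"
    by (cases a; cases x; cases y) (simp_all add: EC_def)
qed

lemma G_ED: "inG (ED a) \<and> psi (ED a) = CED a"
proof (rule gen_G)
  fix c x show "ED a (Nc c x) = Nc (CED a c) (ED a x)"
    by (cases a; cases c; cases x) (simp_all add: ED_def CED_def)
next
  fix x y assume "ED a x = ED a y" then show "x = y"
    by (cases a; cases x; cases y) (simp_all add: ED_def)
qed

lemma G_eb: "inG eb \<and> psi eb = ceb"
proof (rule gen_G)
  fix c x show "eb (Nc c x) = Nc (ceb c) (eb x)"
    by (cases c; cases x) simp_all
next
  fix x y assume "eb x = eb y" then show "x = y"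
    by (cases x; cases y) simp_all
qed

lemma G_ee: "inG ee \<and> psi ee = cee"
proof (rule gen_G)
  fix c x show "ee (Nc c x) = Nc (cee c) (ee x)"
    by (cases c; cases x) simp_all
next
  fix x y assume "ee x = ee y" then show "x = y"
    by (cases x; cases y) simp_all
qed

fun before :: "d list \<Rightarrow> d \<Rightarrow> d \<Rightarrow> bool" where
  "before [] a b = False"
| "before (x#xs) a b = (if x = a then True else if x = b then False else before xs a b)"

fun isB12 :: "d \<Rightarrow> bool" where
  "isB12 D1 = False" | "isB12 D2 = False" | "isB12 D3 = False" | "isB12 D4 = True"
| "isB12 D5 = True" | "isB12 D6 = True" | "isB12 D7 = True" | "isB12 D8 = True" | "isB12 D9 = True"
fun isB2 :: "d \<Rightarrow> bool" where
  "isB2 D1 = False" | "isB2 D2 = False" | "isB2 D3 = False" | "isB2 D4 = False"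
| "isB2 D5 = False" | "isB2 D6 = False" | "isB2 D7 = True" | "isB2 D8 = True" | "isB2 D9 = True"

fun firstP :: "(d \<Rightarrow> bool) \<Rightarrow> d list \<Rightarrow> d" where
  "firstP P [] = D1"
| "firstP P (x#xs) = (if P x then x else firstP P xs)"

lemma before_map: "inj h \<Longrightarrow> before (map h xs) (h a) (h b) = before xs a b"
  by (induction xs) (auto simp: inj_eq)

lemma before_in: "before xs a b \<Longrightarrow> a \<in> set xs"
  by (induction xs) (auto split: if_splits)

lemma before_not: "a \<noteq> b \<Longrightarrow> b \<in> set xs \<Longrightarrow> before xs a b \<longleftrightarrow> \<not> before xs b a"
  by (induction xs) auto

lemma before_trans: "before xs a b \<Longrightarrow> before xs b c \<Longrightarrow> before xs a c"
  by (induction xs) (auto split: if_splits)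

lemma firstP_prop:
  "\<exists>y\<in>set xs. P y \<Longrightarrow> P (firstP P xs) \<and> (\<forall>y. P y \<longrightarrow> y \<noteq> firstP P xs \<longrightarrow> before xs (firstP P xs) y)"
  by (induction xs) auto

definition Q :: "(d \<Rightarrow> bool) \<Rightarrow> d \<Rightarrow> d list \<Rightarrow> bool" where
  "Q S a x \<longleftrightarrow> (\<forall>z. S z \<longrightarrow> z \<noteq> a \<longrightarrow> before x a z)"

lemma Qpres:
  assumes "bij h" "h a = a" "\<forall>z. S (h z) = S z" "Q S a x"
  shows "Q S a (map h x)"
  unfolding Q_def
proof (intro allI impI)
  fix z assume z: "S z" "z \<noteq> a"
  obtain z' where z': "h z' = z" using bij_is_surj[OF assms(1)] by (metis surjD)
  have "S z'" using z z' assms(3) by metis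
  moreover have "z' \<noteq> a" using z z' assms(2) by auto
  ultimately have "before x a z'" using assms(4) unfolding Q_def by blast
  then show "before (map h x) a z" using before_map[OF bij_is_inj[OF assms(1)], of x a z'] assms(2) z' by simp
qed

lemma Qnew:
  assumes "bij h" "\<forall>z. S (h z) = S z" "\<forall>z. S z \<longrightarrow> z \<noteq> u \<longrightarrow> before x u z" "h u = a"
  shows "Q S a (map h x)"
  unfolding Q_def
proof (intro allI impI)
  fix z assume z: "S z" "z \<noteq> a"
  obtain z' where z': "h z' = z" using bij_is_surj[OF assms(1)] by (metis surjD)
  have "S z'" using z z' assms(2) by metis
  moreover have "z' \<noteq> u" using z z' assms(4) by auto
  ultimately have "before x u z'" using assms(3) by blast
  then show "before (map h x) a z" using before_map[OF bij_is_inj[OF assms(1)], of x u z'] assms(4) z' by simp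
qed

lemma before_pres: "bij h \<Longrightarrow> h a = a \<Longrightarrow> h b = b \<Longrightarrow> before x a b \<Longrightarrow> before (map h x) a b"
  using before_map[OF bij_is_inj, of h x a b] by simp

definition P0 :: "d list \<Rightarrow> bool" where
  "P0 x \<longleftrightarrow> distinct x \<and> set x = UNIV"

lemma inG_bij: "inG h \<Longrightarrow> bij h" unfolding inG_def by blast

lemma P0_map: "inG h \<Longrightarrow> P0 x \<Longrightarrow> P0 (map h x)"
  unfolding P0_def using inG_bij[of h]
  by (auto simp: distinct_map bij_is_inj bij_is_surj inj_on_subset)

lemma P0_ne: "P0 x \<Longrightarrow> x \<noteq> []" unfolding P0_def by auto

definition canon :: "d list \<Rightarrow> bool" where
  "canon x \<longleftrightarrow> P0 x \<and> hd x = D1 \<and> before x D2 D3 \<and> before x D4 D5 \<and> before x D5 D6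
     \<and> before x D4 D7 \<and> before x D7 D8 \<and> before x D7 D9"

definition g1 :: "d list \<Rightarrow> d \<Rightarrow> d" where "g1 x = EA (hd x)"
definition g2 :: "d list \<Rightarrow> d \<Rightarrow> d" where "g2 x = (if before x D3 D2 then eb else id)"
definition g3 :: "d list \<Rightarrow> d \<Rightarrow> d" where "g3 x = EC (firstP isB12 x)"
definition g4 :: "d list \<Rightarrow> d \<Rightarrow> d" where "g4 x = ED (firstP isB2 x)"
definition g5 :: "d list \<Rightarrow> d \<Rightarrow> d" where "g5 x = (if before x D6 D5 then ee else id)"
definition k1 :: "d list \<Rightarrow> col \<Rightarrow> col" where "k1 x = CEA (hd x)"
definition k2 :: "d list \<Rightarrow> col \<Rightarrow> col" where "k2 x = (if before x D3 D2 then ceb else id)"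
definition k3 :: "d list \<Rightarrow> col \<Rightarrow> col" where "k3 x = CEC (firstP isB12 x)"
definition k4 :: "d list \<Rightarrow> col \<Rightarrow> col" where "k4 x = CED (firstP isB2 x)"
definition k5 :: "d list \<Rightarrow> col \<Rightarrow> col" where "k5 x = (if before x D6 D5 then cee else id)"

lemma gk1: "inG (g1 x) \<and> psi (g1 x) = k1 x" unfolding g1_def k1_def using G_EA by blast
lemma gk2: "inG (g2 x) \<and> psi (g2 x) = k2 x" unfolding g2_def k2_def using G_eb inG_id psi_id by auto
lemma gk3: "inG (g3 x) \<and> psi (g3 x) = k3 x" unfolding g3_def k3_def using G_EC by blast
lemma gk4: "inG (g4 x) \<and> psi (g4 x) = k4 x" unfolding g4_def k4_def using G_ED by blast
lemma gk5: "inG (g5 x) \<and> psi (g5 x) = k5 x" unfolding g5_def k5_def using G_ee inG_id psi_id by auto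

definition stp :: "(d list \<Rightarrow> d \<Rightarrow> d) \<Rightarrow> (d list \<Rightarrow> col \<Rightarrow> col) \<Rightarrow> d list \<times> col \<Rightarrow> d list \<times> col" where
  "stp g k p = (map (g (fst p)) (fst p), k (fst p) (snd p))"

definition alg :: "d list \<times> col \<Rightarrow> d list \<times> col" where
  "alg p = stp g5 k5 (stp g4 k4 (stp g3 k3 (stp g2 k2 (stp g1 k1 p))))"

lemma stp_G:
  assumes "\<And>y. inG (g y) \<and> psi (g y) = k y" "inG h"
  shows "\<exists>h'. inG h' \<and> stp g k (map h x, psi h c) = (map h' x, psi h' c)"
proof -
  let ?g = "g (map h x)"
  have "inG (?g \<circ> h)" using inG_comp assms by blast
  moreover have "stp g k (map h x, psi h c) = (map (?g \<circ> h) x, psi (?g \<circ> h) c)"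
    unfolding stp_def using assms psi_comp[of ?g h c] by auto
  ultimately show ?thesis by blast
qed

lemma alg_G: "\<exists>h. inG h \<and> alg (x, c) = (map h x, psi h c)"
proof -
  obtain h1 where h1: "inG h1" "stp g1 k1 (x,c) = (map h1 x, psi h1 c)"
    using stp_G[of g1 k1 id x c] gk1 inG_id by (auto simp: psi_id)
  obtain h2 where h2: "inG h2" "stp g2 k2 (map h1 x, psi h1 c) = (map h2 x, psi h2 c)"
    using stp_G[of g2 k2 h1 x c] gk2 h1(1) by blast
  obtain h3 where h3: "inG h3" "stp g3 k3 (map h2 x, psi h2 c) = (map h3 x, psi h3 c)"
    using stp_G[of g3 k3 h2 x c] gk3 h2(1) by blast
  obtain h4 where h4: "inG h4" "stp g4 k4 (map h3 x, psi h3 c) = (map h4 x, psi h4 c)"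
    using stp_G[of g4 k4 h3 x c] gk4 h3(1) by blast
  obtain h5 where h5: "inG h5" "stp g5 k5 (map h4 x, psi h4 c) = (map h5 x, psi h5 c)"
    using stp_G[of g5 k5 h4 x c] gk5 h4(1) by blast
  have "alg (x, c) = (map h5 x, psi h5 c)" unfolding alg_def using h1 h2 h3 h4 h5 by simp
  then show ?thesis using h5 by blast
qed

lemma EA_self: "EA a a = D1" by (cases a) (simp_all add: EA_def)
lemma EC_fix: "isB12 u \<Longrightarrow> EC u D1 = D1 \<and> EC u D2 = D2 \<and> EC u D3 = D3 \<and> EC u u = D4"
  by (cases u) (simp_all add: EC_def)
lemma EC_B12: "isB12 (EC u z) = isB12 z" by (cases u; cases z) (simp_all add: EC_def)
lemma ED_fix: "isB2 w \<Longrightarrow> ED w D1 = D1 \<and> ED w D2 = D2 \<and> ED w D3 = D3 \<and> ED w D4 = D4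
   \<and> ED w D5 = D5 \<and> ED w D6 = D6 \<and> ED w w = D7"
  by (cases w) (simp_all add: ED_def)
lemma ED_B12: "isB12 (ED w z) = isB12 z" by (cases w; cases z) (simp_all add: ED_def)
lemma ED_B2: "isB2 (ED w z) = isB2 z" by (cases w; cases z) (simp_all add: ED_def)
lemma ee_B12: "isB12 (ee z) = isB12 z" by (cases z) simp_all
lemma ee_B2: "isB2 (ee z) = isB2 z" by (cases z) simp_all

lemma hd_map': "x \<noteq> [] \<Longrightarrow> hd (map f x) = f (hd x)" by (cases x) auto

lemma alg_fst: "fst (alg (x,c)) =
  (let x1 = map (g1 x) x; x2 = map (g2 x1) x1; x3 = map (g3 x2) x2; x4 = map (g4 x3) x3 in map (g5 x4) x4)"
  by (simp add: alg_def stp_def Let_def del: map_map)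

lemma alg_canon: assumes "P0 x" shows "canon (fst (alg (x,c)))"
proof -
  define x1 where "x1 = map (g1 x) x"
  define x2 where "x2 = map (g2 x1) x1"
  define x3 where "x3 = map (g3 x2) x2"
  define x4 where "x4 = map (g4 x3) x3"
  define x5 where "x5 = map (g5 x4) x4"
  have e: "fst (alg (x,c)) = x5" unfolding alg_fst x1_def x2_def x3_def x4_def x5_def Let_def ..
  have P1: "P0 x1" unfolding x1_def using P0_map gk1 assms by blast
  have P2: "P0 x2" unfolding x2_def using P0_map gk2 P1 by blast
  have P3: "P0 x3" unfolding x3_def using P0_map gk3 P2 by blast
  have P4: "P0 x4" unfolding x4_def using P0_map gk4 P3 by blast
  have P5: "P0 x5" unfolding x5_def using P0_map gk5 P4 by blast
  have mem: "\<And>y z. P0 y \<Longrightarrow> z \<in> set y" unfolding P0_def by auto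
  have h1: "hd x1 = D1" unfolding x1_def g1_def using P0_ne[OF assms] by (simp add: hd_map' EA_self)
  have bij2: "bij (g2 x1)" using gk2 inG_bij by blast
  have h2: "hd x2 = D1" unfolding x2_def g2_def using P0_ne[OF P1] h1 by (simp add: hd_map')
  have b2: "before x2 D2 D3"
  proof (cases "before x1 D3 D2")
    case True
    then have "x2 = map eb x1" unfolding x2_def g2_def by simp
    moreover have "inj eb" using G_eb inG_bij bij_is_inj by blast
    ultimately show ?thesis using before_map[of eb x1 D3 D2] True by simp
  next
    case False
    then have "x2 = x1" unfolding x2_def g2_def by simp
    with False show ?thesis using before_not[of D3 D2 x1] mem[OF P1] by simp
  qed
  define u where "u = firstP isB12 x2"
  have "\<exists>y\<in>set x2. isB12 y" using mem[OF P2, of D4] by force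
  from firstP_prop[OF this] have u1: "isB12 u" and u2: "\<forall>y. isB12 y \<longrightarrow> y \<noteq> u \<longrightarrow> before x2 u y"
    unfolding u_def by blast+
  have bij3: "bij (EC u)" using G_EC inG_bij by blast
  have x3e: "x3 = map (EC u) x2" unfolding x3_def g3_def u_def ..
  have h3: "hd x3 = D1" unfolding x3e using P0_ne[OF P2] h2 EC_fix[OF u1] by (simp add: hd_map')
  have b3: "before x3 D2 D3" unfolding x3e using before_pres[OF bij3 _ _ b2] EC_fix[OF u1] by simp
  have q3: "Q isB12 D4 x3" unfolding x3e using Qnew[OF bij3 _ u2] EC_B12 EC_fix[OF u1] by simp
  define w where "w = firstP isB2 x3"
  have "\<exists>y\<in>set x3. isB2 y" using mem[OF P3, of D7] by force
  from firstP_prop[OF this] have w1: "isB2 w" and w2: "\<forall>y. isB2 y \<longrightarrow> y \<noteq> w \<longrightarrow> before x3 w y"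
    unfolding w_def by blast+
  have bij4: "bij (ED w)" using G_ED inG_bij by blast
  have x4e: "x4 = map (ED w) x3" unfolding x4_def g4_def w_def ..
  have h4: "hd x4 = D1" unfolding x4e using P0_ne[OF P3] h3 ED_fix[OF w1] by (simp add: hd_map')
  have b4: "before x4 D2 D3" unfolding x4e using before_pres[OF bij4 _ _ b3] ED_fix[OF w1] by simp
  have q4: "Q isB12 D4 x4" unfolding x4e using Qpres[OF bij4 _ _ q3] ED_B12 ED_fix[OF w1] by simp
  have r4: "Q isB2 D7 x4" unfolding x4e using Qnew[OF bij4 _ w2] ED_B2 ED_fix[OF w1] by simp
  let ?h = "g5 x4"
  have bij5: "bij ?h" using gk5 inG_bij by blast
  have f5: "?h D1 = D1 \<and> ?h D2 = D2 \<and> ?h D3 = D3 \<and> ?h D4 = D4 \<and> ?h D7 = D7"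
    unfolding g5_def by simp
  have s5: "\<forall>z. isB12 (?h z) = isB12 z" "\<forall>z. isB2 (?h z) = isB2 z"
    unfolding g5_def using ee_B12 ee_B2 by auto
  have h5: "hd x5 = D1" unfolding x5_def using P0_ne[OF P4] h4 f5 by (simp add: hd_map')
  have b5: "before x5 D2 D3" unfolding x5_def using before_pres[OF bij5 _ _ b4] f5 by simp
  have q5: "Q isB12 D4 x5" unfolding x5_def using Qpres[OF bij5 _ _ q4] s5 f5 by simp
  have r5: "Q isB2 D7 x5" unfolding x5_def using Qpres[OF bij5 _ _ r4] s5 f5 by simp
  have c5: "before x5 D5 D6"
  proof (cases "before x4 D6 D5")
    case True
    then have "x5 = map ee x4" unfolding x5_def g5_def by simp
    moreover have "inj ee" using G_ee inG_bij bij_is_inj by blast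
    ultimately show ?thesis using before_map[of ee x4 D6 D5] True by simp
  next
    case False
    then have "x5 = x4" unfolding x5_def g5_def by simp
    with False show ?thesis using before_not[of D6 D5 x4] mem[OF P4] by simp
  qed
  have "canon x5" unfolding canon_def using P5 h5 b5 c5 q5 r5 unfolding Q_def by simp
  then show ?thesis using e by simp
qed

lemma canon_Q: assumes "canon x" shows "Q isB12 D4 x" "Q isB2 D7 x"
proof -
  have a: "before x D4 D5" "before x D5 D6" "before x D4 D7" "before x D7 D8" "before x D7 D9"
    using assms unfolding canon_def by auto
  have b: "before x D4 D6" "before x D4 D8" "before x D4 D9" using a before_trans by blast+
  show "Q isB12 D4 x" unfolding Q_def
  proof (intro allI impI)
    fix z :: d assume "isB12 z" "z \<noteq> D4" then show "before x D4 z" using a b by (cases z) auto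
  qed
  show "Q isB2 D7 x" unfolding Q_def
  proof (intro allI impI)
    fix z :: d assume "isB2 z" "z \<noteq> D7" then show "before x D7 z" using a b by (cases z) auto
  qed
qed

lemma uniq: assumes "inG m" "canon x" "canon (map m x)" shows "m = id"
proof -
  let ?y = "map m x"
  define c' where "c' = psi m C0"
  have Nm: "\<And>z. m (Nc C0 z) = Nc c' (m z)" using psi_prop[OF assms(1)] c'_def by simp
  have bm: "bij m" using assms(1) inG_bij by blast
  have im: "inj m" using bm bij_is_inj by blast
  have sm: "surj m" using bm bij_is_surj by blast
  have Px: "P0 x" and Py: "P0 ?y" and hx: "hd x = D1" and hy: "hd ?y = D1"
    using assms(2,3) unfolding canon_def by auto
  have memy: "\<And>z. z \<in> set ?y" using Py unfolding P0_def by auto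
  have m1: "m D1 = D1" using hx hy P0_ne[OF Px] by (simp add: hd_map')
  have m2: "m D2 = Nc c' D1" using Nm[of D1] m1 by simp
  have m3: "m D3 = Nc c' (Nc c' D1)" using Nm[of D2] m2 by simp
  have F1: "(Nc c' D1 = D2 \<and> Nc c' D2 = D3) \<or> (Nc c' D1 = D3 \<and> Nc c' D3 = D2)" by (cases c') simp_all
  have m23: "m D2 = D2 \<and> m D3 = D3"
  proof (rule ccontr)
    assume "\<not> ?thesis" with F1 m2 m3 have s: "m D2 = D3 \<and> m D3 = D2" by auto
    have "before x D2 D3" using assms(2) unfolding canon_def by simp
    then have "before ?y D3 D2" using before_map[OF im, of x D2 D3] s by simp
    moreover have "before ?y D2 D3" using assms(3) unfolding canon_def by simp
    ultimately show False using before_not[of D3 D2 ?y] memy by simp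
  qed
  then have NcD1: "Nc c' D1 = D2" using m2 by simp
  have Qx: "Q isB12 D4 x" "Q isB2 D7 x" using canon_Q[OF assms(2)] by auto
  have Qy: "Q isB12 D4 ?y" "Q isB2 D7 ?y" using canon_Q[OF assms(3)] by auto
  have m4: "m D4 = D4"
  proof (rule ccontr)
    assume ne: "m D4 \<noteq> D4"
    have "m D4 \<noteq> m D1" "m D4 \<noteq> m D2" "m D4 \<noteq> m D3" using im by (auto simp: inj_eq)
    then have "isB12 (m D4)" using m1 m23 by (cases "m D4") simp_all
    then have b1: "before ?y D4 (m D4)" using Qy(1) ne unfolding Q_def by blast
    obtain z where z: "m z = D4" using sm by (metis surjD)
    have "m z \<noteq> m D1" "m z \<noteq> m D2" "m z \<noteq> m D3" using z m1 m23 by auto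
    then have "z \<noteq> D1" "z \<noteq> D2" "z \<noteq> D3" by auto
    moreover have "z \<noteq> D4" using z ne by auto
    ultimately have "isB12 z" by (cases z) simp_all
    then have "before x D4 z" using Qx(1) \<open>z \<noteq> D4\<close> unfolding Q_def by blast
    then have "before ?y (m D4) D4" using before_map[OF im, of x D4 z] z by simp
    with b1 show False using before_not[of D4 "m D4" ?y] ne memy by auto
  qed
  have m5: "m D5 = Nc c' D4" using Nm[of D4] m4 by simp
  have m6: "m D6 = Nc c' (Nc c' D4)" using Nm[of D5] m5 by simp
  have F2: "(Nc c' D4 = D5 \<and> Nc c' D5 = D6) \<or> (Nc c' D4 = D6 \<and> Nc c' D6 = D5)" by (cases c') simp_all
  have m56: "m D5 = D5 \<and> m D6 = D6"
  proof (rule ccontr)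
    assume "\<not> ?thesis" with F2 m5 m6 have s: "m D5 = D6 \<and> m D6 = D5" by auto
    have "before x D5 D6" using assms(2) unfolding canon_def by simp
    then have "before ?y D6 D5" using before_map[OF im, of x D5 D6] s by simp
    moreover have "before ?y D5 D6" using assms(3) unfolding canon_def by simp
    ultimately show False using before_not[of D6 D5 ?y] memy by simp
  qed
  then have NcD4: "Nc c' D4 = D5" using m5 by simp
  have m7: "m D7 = D7"
  proof (rule ccontr)
    assume ne: "m D7 \<noteq> D7"
    have "m D7 \<noteq> m D1" "m D7 \<noteq> m D2" "m D7 \<noteq> m D3" "m D7 \<noteq> m D4" "m D7 \<noteq> m D5" "m D7 \<noteq> m D6"
      using im by (auto simp: inj_eq)
    then have "isB2 (m D7)" using m1 m23 m4 m56 by (cases "m D7") simp_all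
    then have b1: "before ?y D7 (m D7)" using Qy(2) ne unfolding Q_def by blast
    obtain z where z: "m z = D7" using sm by (metis surjD)
    have "m z \<noteq> m D1" "m z \<noteq> m D2" "m z \<noteq> m D3" "m z \<noteq> m D4" "m z \<noteq> m D5" "m z \<noteq> m D6"
      using z m1 m23 m4 m56 by auto
    then have "z \<noteq> D1" "z \<noteq> D2" "z \<noteq> D3" "z \<noteq> D4" "z \<noteq> D5" "z \<noteq> D6" by auto
    moreover have "z \<noteq> D7" using z ne by auto
    ultimately have "isB2 z" by (cases z) simp_all
    then have "before x D7 z" using Qx(2) \<open>z \<noteq> D7\<close> unfolding Q_def by blast
    then have "before ?y (m D7) D7" using before_map[OF im, of x D7 z] z by simp
    with b1 show False using before_not[of D7 "m D7" ?y] ne memy by auto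
  qed
  have F3: "Nc c' D7 = D8 \<and> Nc c' D8 = D9" using NcD1 NcD4 by (cases c') simp_all
  have m8: "m D8 = D8" using Nm[of D7] m7 F3 by simp
  have m9: "m D9 = D9" using Nm[of D8] m8 F3 by simp
  show "m = id"
  proof
    fix z show "m z = id z" using m1 m23 m4 m56 m7 m8 m9 by (cases z) simp_all
  qed
qed

datatype trie = L col | N trie trie trie trie trie trie trie trie trie

fun lk :: "trie \<Rightarrow> d list \<Rightarrow> col" where
  "lk (L c) xs = c"
| "lk (N t1 t2 t3 t4 t5 t6 t7 t8 t9) [] = C0"
| "lk (N t1 t2 t3 t4 t5 t6 t7 t8 t9) (D1 # xs) = lk t1 xs"
| "lk (N t1 t2 t3 t4 t5 t6 t7 t8 t9) (D2 # xs) = lk t2 xs"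
| "lk (N t1 t2 t3 t4 t5 t6 t7 t8 t9) (D3 # xs) = lk t3 xs"
| "lk (N t1 t2 t3 t4 t5 t6 t7 t8 t9) (D4 # xs) = lk t4 xs"
| "lk (N t1 t2 t3 t4 t5 t6 t7 t8 t9) (D5 # xs) = lk t5 xs"
| "lk (N t1 t2 t3 t4 t5 t6 t7 t8 t9) (D6 # xs) = lk t6 xs"
| "lk (N t1 t2 t3 t4 t5 t6 t7 t8 t9) (D7 # xs) = lk t7 xs"
| "lk (N t1 t2 t3 t4 t5 t6 t7 t8 t9) (D8 # xs) = lk t8 xs"
| "lk (N t1 t2 t3 t4 t5 t6 t7 t8 t9) (D9 # xs) = lk t9 xs"

lemma lk_cong: "xs = ys \<Longrightarrow> lk t xs = lk t ys" by simp

definition tr :: trie where "tr = (N (N (L C0) (N (L C0) (L C0) (N (L C0) (L C0) (L C0) (N (L C0) (L C0) (L C0) (L C0) (N (L C0) (L C0) (L C0) (L C0) (L C0) (N (L C0) (L C0) (L C0) (L C0) (L C0) (L C0) (N (L C0) (L C0) (L C0) (L C0) (L C0) (L C0) (L C0) (L C3) (L C0)) (L C0) (L C0)) (N (L C0) (L C0) (L C0) (L C0) (L C0) (N (L C0) (L C0) (L C0) (L C0) (L C0) (L C0) (L C0) (L C0) (L C0)) (L C0) (N (L C0) (L C0) (L C0) (L C0) (L C0) (L C0) (L C0) (L C0) (L C2)) (N (L C0) (L C0) (L C0) (L C0) (L C0) (L C3) (L C0) (L C3) (L C0))) (L C0) (L C0)) (L C0) (N (L C0) (L C0) (L C0) (L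 C0) (N (L C0) (L C0) (L C0) (L C0) (L C0) (N (L C0) (L C0) (L C0) (L C0) (L C0) (L C0) (L C0) (L C3) (L C2)) (L C0) (N (L C0) (L C0) (L C0) (L C0) (L C0) (L C2) (L C0) (L C0) (L C3)) (N (L C0) (L C0) (L C0) (L C0) (L C0) (L C2) (L C0) (L C2) (L C0))) (L C0) (L C0) (N (L C0) (L C0) (L C0) (L C0) (N (L C0) (L C0) (L C0) (L C0) (L C0) (L C1) (L C0) (L C0) (L C0)) (L C0) (L C0) (L C0) (L C0)) (N (L C0) (L C0) (L C0) (L C0) (N (L C0) (L C0) (L C0) (L C0) (L C0) (L C1) (L C0) (L C3) (L C0)) (L C0) (L C0) (L C1) (L C0))) (L C0) (L C0)) (L C0) (L C0) (L C0) (L C0) (L C0)) (N (L C0) (L C0) (N (L C0) (L C0) (L C0) (L C0) (N (L C0) (L C0) (L C0) (L C0) (L C0) (N (L C0) (L C0) (L C0) (L C0) (L C0) (L C0) (N (L C0) (L C0) (L C0) (L C0) (L C0) (L C0) (L C0) (L C3) (L C0)) (L C0) (L C0)) (N (L C0) (L C0) (L C0) (L C0) (L C0) (N (L C0) (L C0) (L C0) (L C0) (L C0) (L C0) (L C0) (L C2) (L C2)) (L C0) (N (L C0) (L C0) (L C0) (L C0) (L C0) (L C0) (L C0) (L C0) (L C1)) (N (L C0) (L C0) (L C0) (L C0) (L C0) (L C0) (L C0) (L C1) (L C0))) (L C0) (L C0)) (L C0) (N (L C0) (L C0) (L C0) (L C0) (N (L C0) (L C0) (L C0) (L C0) (L C0)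 (N (L C0) (L C0) (L C0) (L C0) (L C0) (L C0) (L C0) (L C2) (L C1)) (L C0) (N (L C0) (L C0) (L C0) (L C0) (L C0) (L C1) (L C0) (L C0) (L C1)) (N (L C0) (L C0) (L C0) (L C0) (L C0) (L C2) (L C0) (L C1) (L C0))) (L C0) (L C0) (N (L C0) (L C0) (L C0) (L C0) (N (L C0) (L C0) (L C0) (L C0) (L C0) (L C1) (L C0) (L C0) (L C3)) (L C0) (L C0) (L C0) (L C3)) (N (L C0) (L C0) (L C0) (L C0) (N (L C0) (L C0) (L C0) (L C0) (L C0) (L C1) (L C0) (L C0) (L C0)) (L C0) (L C0) (L C3) (L C0))) (L C0) (L C0)) (L C0) (N (L C0) (L C0) (N (L C0) (L C0) (L C0) (L C0) (L C0) (N (L C0) (L C0) (L C0) (L C0) (L C0) (L C0) (N (L C0) (L C0) (L C0) (L C0) (L C0) (L C0) (L C0) (L C1) (L C1)) (L C0) (L C0)) (N (L C0) (L C0) (L C0) (L C0) (L C0) (N (L C0) (L C0) (L C0) (L C0) (L C0) (L C0) (L C0) (L C0) (L C0)) (L C0) (N (L C0) (L C0) (L C0) (L C0) (L C0) (L C3) (L C0) (L C0) (L C2)) (N (L C0) (L C0) (L C0) (L C0) (L C0) (L C3) (L C0) (L C3) (L C0))) (L C0) (L C0)) (L C0) (L C0) (N (L C0) (L C0) (N (L C0) (L C0) (L C0) (L C0) (L C0) (L C0) (N (L C0) (L C0) (L C0) (L C0) (L C0) (L C0) (L C0) (L C3) (L C0)) (L C0) (L C0)) (L C0) (L C0) (L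 C0) (N (L C0) (L C0) (N (L C0) (L C0) (L C0) (L C0) (L C0) (L C0) (L C0) (L C1) (L C2)) (L C0) (L C0) (L C0) (L C0) (N (L C0) (L C0) (L C1) (L C0) (L C0) (L C0) (L C0) (L C0) (L C0)) (N (L C0) (L C0) (L C2) (L C0) (L C0) (L C0) (L C0) (L C1) (L C0))) (L C0) (L C0)) (N (L C0) (L C0) (N (L C0) (L C0) (L C0) (L C0) (L C0) (N (L C0) (L C0) (L C0) (L C0) (L C0) (L C0) (L C0) (L C0) (L C0)) (L C0) (N (L C0) (L C0) (L C0) (L C0) (L C0) (L C2) (L C0) (L C0) (L C0)) (N (L C0) (L C0) (L C0) (L C0) (L C0) (L C2) (L C0) (L C3) (L C0))) (L C0) (L C0) (N (L C0) (L C0) (N (L C0) (L C0) (L C0) (L C0) (L C0) (L C0) (L C0) (L C1) (L C0)) (L C0) (L C0) (L C0) (L C0) (N (L C0) (L C0) (L C3) (L C0) (L C0) (L C0) (L C0) (L C0) (L C2)) (N (L C0) (L C0) (L C0) (L C0) (L C0) (L C0) (L C0) (L C3) (L C0))) (L C0) (N (L C0) (L C0) (N (L C0) (L C0) (L C0) (L C0) (L C0) (L C1) (L C0) (L C0) (L C1)) (L C0) (L C0) (N (L C0) (L C0) (L C3) (L C0) (L C0) (L C0) (L C0) (L C0) (L C3)) (L C0) (L C0) (N (L C0) (L C0) (L C2) (L C0) (L C0) (L C1) (L C0) (L C0) (L C0))) (N (L C0) (L C0) (N (L C0) (L C0) (L C0) (L C0) (L C0) (L C2) (L C0) (L C0)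 (L C0)) (L C0) (L C0) (N (L C0) (L C0) (L C3) (L C0) (L C0) (L C0) (L C0) (L C0) (L C0)) (L C0) (N (L C0) (L C0) (L C2) (L C0) (L C0) (L C1) (L C0) (L C0) (L C0)) (L C0))) (L C0) (L C0)) (L C0) (N (L C0) (L C0) (N (L C0) (L C0) (L C0) (L C0) (N (L C0) (L C0) (L C0) (L C0) (L C0) (N (L C0) (L C0) (L C0) (L C0) (L C0) (L C0) (L C0) (L C3) (L C0)) (L C0) (N (L C0) (L C0) (L C0) (L C0) (L C0) (L C3) (L C0) (L C0) (L C0)) (N (L C0) (L C0) (L C0) (L C0) (L C0) (L C2) (L C0) (L C1) (L C0))) (L C0) (L C0) (N (L C0) (L C0) (L C0) (L C0) (N (L C0) (L C0) (L C0) (L C0) (L C0) (L C0) (L C0) (L C0) (L C3)) (L C0) (L C0) (L C0) (L C0)) (N (L C0) (L C0) (L C0) (L C0) (N (L C0) (L C0) (L C0) (L C0) (L C0) (L C0) (L C0) (L C3) (L C0)) (L C0) (L C0) (L C3) (L C0))) (L C0) (N (L C0) (L C0) (N (L C0) (L C0) (L C0) (L C0) (L C0) (N (L C0) (L C0) (L C0) (L C0) (L C0) (L C0) (L C0) (L C3) (L C3)) (L C0) (N (L C0) (L C0) (L C0) (L C0) (L C0) (L C1) (L C0) (L C0) (L C0)) (N (L C0) (L C0) (L C0) (L C0) (L C0) (L C1) (L C0) (L C0) (L C0))) (L C0) (L C0) (N (L C0) (L C0) (N (L C0) (L C0) (L C0) (L C0) (L C0) (L C0) (L C0) (L C0) (L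 C1)) (L C0) (L C0) (L C0) (L C0) (N (L C0) (L C0) (L C1) (L C0) (L C0) (L C0) (L C0) (L C0) (L C0)) (N (L C0) (L C0) (L C2) (L C0) (L C0) (L C0) (L C0) (L C1) (L C0))) (L C0) (N (L C0) (L C0) (N (L C0) (L C0) (L C0) (L C0) (L C0) (L C1) (L C0) (L C0) (L C2)) (L C0) (L C0) (N (L C0) (L C0) (L C2) (L C0) (L C0) (L C0) (L C0) (L C0) (L C2)) (L C0) (L C0) (N (L C0) (L C0) (L C0) (L C0) (L C0) (L C0) (L C0) (L C0) (L C0))) (N (L C0) (L C0) (N (L C0) (L C0) (L C0) (L C0) (L C0) (L C0) (L C0) (L C1) (L C0)) (L C0) (L C0) (N (L C0) (L C0) (L C2) (L C0) (L C0) (L C0) (L C0) (L C2) (L C0)) (L C0) (N (L C0) (L C0) (L C3) (L C0) (L C0) (L C0) (L C0) (L C0) (L C0)) (L C0))) (L C0) (L C0) (N (L C0) (L C0) (N (L C0) (L C0) (L C0) (L C0) (N (L C0) (L C0) (L C0) (L C0) (L C0) (L C0) (L C0) (L C0) (L C2)) (L C0) (L C0) (L C0) (L C0)) (L C0) (N (L C0) (L C0) (N (L C0) (L C0) (L C0) (L C0) (L C0) (L C1) (L C0) (L C0) (L C3)) (L C0) (L C0) (N (L C0) (L C0) (L C3) (L C0) (L C0) (L C0) (L C0) (L C0) (L C1)) (L C0) (L C0) (N (L C0) (L C0) (L C1) (L C0) (L C0) (L C3) (L C0) (L C0) (L C0))) (L C0) (L C0) (L C0) (N (L C0) (L C0)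 (L C1) (L C0) (N (L C0) (L C0) (L C1) (L C0) (L C0) (L C3) (L C0) (L C0) (L C0)) (L C0) (L C0) (L C0) (L C0))) (N (L C0) (L C0) (N (L C0) (L C0) (L C0) (L C0) (N (L C0) (L C0) (L C0) (L C0) (L C0) (L C1) (L C0) (L C2) (L C0)) (L C0) (L C0) (L C1) (L C0)) (L C0) (N (L C0) (L C0) (N (L C0) (L C0) (L C0) (L C0) (L C0) (L C1) (L C0) (L C3) (L C0)) (L C0) (L C0) (N (L C0) (L C0) (L C3) (L C0) (L C0) (L C0) (L C0) (L C0) (L C0)) (L C0) (N (L C0) (L C0) (L C0) (L C0) (L C0) (L C0) (L C0) (L C0) (L C0)) (L C0)) (L C0) (L C0) (N (L C0) (L C0) (L C0) (L C0) (N (L C0) (L C0) (L C0) (L C0) (L C0) (L C0) (L C0) (L C0) (L C0)) (L C0) (L C0) (L C0) (L C0)) (L C0))) (L C0) (L C0)) (L C0) (L C0) (L C0) (L C0) (L C0)) (L C0) (N (L C0) (N (L C0) (L C0) (N (L C0) (L C0) (L C0) (L C0) (N (L C0) (L C0) (L C0) (L C0) (L C0) (N (L C0) (L C0) (L C0) (L C0) (L C0) (L C0) (N (L C0) (L C0) (L C0) (L C0) (L C0) (L C0) (L C0) (L C3) (L C0)) (L C0) (L C0)) (N (L C0) (L C0) (L C0) (L C0) (L C0) (N (L C0) (L C0) (L C0) (L C0) (L C0) (L C0) (L C0) (L C2) (L C2)) (L C0) (N (L C0) (L C0) (L C0) (L C0) (L C0) (L C3) (L C0) (L C0) (L C2))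 (N (L C0) (L C0) (L C0) (L C0) (L C0) (L C0) (L C0) (L C2) (L C0))) (L C0) (L C0)) (L C0) (N (L C0) (L C0) (L C0) (L C0) (N (L C0) (L C0) (L C0) (L C0) (L C0) (N (L C0) (L C0) (L C0) (L C0) (L C0) (L C0) (L C0) (L C1) (L C1)) (L C0) (N (L C0) (L C0) (L C0) (L C0) (L C0) (L C3) (L C0) (L C0) (L C2)) (N (L C0) (L C0) (L C0) (L C0) (L C0) (L C2) (L C0) (L C1) (L C0))) (L C0) (L C0) (N (L C0) (L C0) (L C0) (L C0) (N (L C0) (L C0) (L C0) (L C0) (L C0) (L C0) (L C0) (L C0) (L C3)) (L C0) (L C0) (L C0) (L C3)) (N (L C0) (L C0) (L C0) (L C0) (N (L C0) (L C0) (L C0) (L C0) (L C0) (L C0) (L C0) (L C0) (L C0)) (L C0) (L C0) (L C2) (L C0))) (L C0) (L C0)) (L C0) (N (L C0) (L C0) (N (L C0) (L C0) (L C0) (L C0) (L C0) (N (L C0) (L C0) (L C0) (L C0) (L C0) (L C0) (N (L C0) (L C0) (L C0) (L C0) (L C0) (L C0) (L C0) (L C0) (L C0)) (L C0) (L C0)) (N (L C0) (L C0) (L C0) (L C0) (L C0) (N (L C0) (L C0) (L C0) (L C0) (L C0) (L C0) (L C0) (L C1) (L C1)) (L C0) (N (L C0) (L C0) (L C0) (L C0) (L C0) (L C0) (L C0) (L C0) (L C1)) (N (L C0) (L C0) (L C0) (L C0) (L C0) (L C0) (L C0) (L C0) (L C0))) (L C0) (L C0)) (L C0) (L C0) (N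 (L C0) (L C0) (N (L C0) (L C0) (L C0) (L C0) (L C0) (L C0) (N (L C0) (L C0) (L C0) (L C0) (L C0) (L C0) (L C0) (L C1) (L C0)) (L C0) (L C0)) (L C0) (L C0) (L C0) (N (L C0) (L C0) (N (L C0) (L C0) (L C0) (L C0) (L C0) (L C0) (L C0) (L C3) (L C0)) (L C0) (L C0) (L C0) (L C0) (N (L C0) (L C0) (L C1) (L C0) (L C0) (L C0) (L C0) (L C0) (L C3)) (N (L C0) (L C0) (L C0) (L C0) (L C0) (L C0) (L C0) (L C0) (L C0))) (L C0) (L C0)) (N (L C0) (L C0) (N (L C0) (L C0) (L C0) (L C0) (L C0) (N (L C0) (L C0) (L C0) (L C0) (L C0) (L C0) (L C0) (L C0) (L C0)) (L C0) (N (L C0) (L C0) (L C0) (L C0) (L C0) (L C2) (L C0) (L C0) (L C1)) (N (L C0) (L C0) (L C0) (L C0) (L C0) (L C1) (L C0) (L C2) (L C0))) (L C0) (L C0) (N (L C0) (L C0) (N (L C0) (L C0) (L C0) (L C0) (L C0) (L C0) (L C0) (L C2) (L C2)) (L C0) (L C0) (L C0) (L C0) (N (L C0) (L C0) (L C1) (L C0) (L C0) (L C0) (L C0) (L C0) (L C2)) (N (L C0) (L C0) (L C2) (L C0) (L C0) (L C0) (L C0) (L C3) (L C0))) (L C0) (N (L C0) (L C0) (N (L C0) (L C0) (L C0) (L C0) (L C0) (L C2) (L C0) (L C0) (L C2)) (L C0) (L C0) (N (L C0) (L C0) (L C1) (L C0) (L C0) (L C0) (L C0) (L C0) (L C0))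 (L C0) (L C0) (N (L C0) (L C0) (L C0) (L C0) (L C0) (L C2) (L C0) (L C0) (L C0))) (N (L C0) (L C0) (N (L C0) (L C0) (L C0) (L C0) (L C0) (L C2) (L C0) (L C2) (L C0)) (L C0) (L C0) (N (L C0) (L C0) (L C0) (L C0) (L C0) (L C0) (L C0) (L C0) (L C0)) (L C0) (N (L C0) (L C0) (L C3) (L C0) (L C0) (L C3) (L C0) (L C0) (L C0)) (L C0))) (L C0) (L C0)) (L C0) (N (L C0) (L C0) (N (L C0) (L C0) (L C0) (L C0) (N (L C0) (L C0) (L C0) (L C0) (L C0) (N (L C0) (L C0) (L C0) (L C0) (L C0) (L C0) (L C0) (L C2) (L C3)) (L C0) (N (L C0) (L C0) (L C0) (L C0) (L C0) (L C3) (L C0) (L C0) (L C2)) (N (L C0) (L C0) (L C0) (L C0) (L C0) (L C3) (L C0) (L C3) (L C0))) (L C0) (L C0) (N (L C0) (L C0) (L C0) (L C0) (N (L C0) (L C0) (L C0) (L C0) (L C0) (L C2) (L C0) (L C0) (L C3)) (L C0) (L C0) (L C0) (L C2)) (N (L C0) (L C0) (L C0) (L C0) (N (L C0) (L C0) (L C0) (L C0) (L C0) (L C2) (L C0) (L C3) (L C0)) (L C0) (L C0) (L C3) (L C0))) (L C0) (N (L C0) (L C0) (N (L C0) (L C0) (L C0) (L C0) (L C0) (N (L C0) (L C0) (L C0) (L C0) (L C0) (L C0) (L C0) (L C3) (L C3)) (L C0) (N (L C0) (L C0) (L C0) (L C0) (L C0) (L C0) (L C0) (L C0) (L C2)) (N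 (L C0) (L C0) (L C0) (L C0) (L C0) (L C1) (L C0) (L C3) (L C0))) (L C0) (L C0) (N (L C0) (L C0) (N (L C0) (L C0) (L C0) (L C0) (L C0) (L C0) (L C0) (L C1) (L C1)) (L C0) (L C0) (L C0) (L C0) (N (L C0) (L C0) (L C1) (L C0) (L C0) (L C0) (L C0) (L C0) (L C2)) (N (L C0) (L C0) (L C1) (L C0) (L C0) (L C0) (L C0) (L C2) (L C0))) (L C0) (N (L C0) (L C0) (N (L C0) (L C0) (L C0) (L C0) (L C0) (L C3) (L C0) (L C0) (L C3)) (L C0) (L C0) (N (L C0) (L C0) (L C3) (L C0) (L C0) (L C0) (L C0) (L C0) (L C0)) (L C0) (L C0) (N (L C0) (L C0) (L C0) (L C0) (L C0) (L C2) (L C0) (L C0) (L C0))) (N (L C0) (L C0) (N (L C0) (L C0) (L C0) (L C0) (L C0) (L C3) (L C0) (L C2) (L C0)) (L C0) (L C0) (N (L C0) (L C0) (L C2) (L C0) (L C0) (L C0) (L C0) (L C1) (L C0)) (L C0) (N (L C0) (L C0) (L C1) (L C0) (L C0) (L C3) (L C0) (L C0) (L C0)) (L C0))) (L C0) (L C0) (N (L C0) (L C0) (N (L C0) (L C0) (L C0) (L C0) (N (L C0) (L C0) (L C0) (L C0) (L C0) (L C3) (L C0) (L C0) (L C0)) (L C0) (L C0) (L C0) (L C0)) (L C0) (N (L C0) (L C0) (N (L C0) (L C0) (L C0) (L C0) (L C0) (L C0) (L C0) (L C0) (L C1)) (L C0) (L C0) (N (L C0) (L C0) (L C1) (L C0)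 (L C0) (L C0) (L C0) (L C0) (L C3)) (L C0) (L C0) (N (L C0) (L C0) (L C3) (L C0) (L C0) (L C0) (L C0) (L C0) (L C0))) (L C0) (L C0) (L C0) (N (L C0) (L C0) (L C2) (L C0) (N (L C0) (L C0) (L C2) (L C0) (L C0) (L C1) (L C0) (L C0) (L C0)) (L C0) (L C0) (L C0) (L C0))) (N (L C0) (L C0) (N (L C0) (L C0) (L C0) (L C0) (N (L C0) (L C0) (L C0) (L C0) (L C0) (L C2) (L C0) (L C0) (L C0)) (L C0) (L C0) (L C3) (L C0)) (L C0) (N (L C0) (L C0) (N (L C0) (L C0) (L C0) (L C0) (L C0) (L C1) (L C0) (L C0) (L C0)) (L C0) (L C0) (N (L C0) (L C0) (L C1) (L C0) (L C0) (L C0) (L C0) (L C2) (L C0)) (L C0) (N (L C0) (L C0) (L C2) (L C0) (L C0) (L C1) (L C0) (L C0) (L C0)) (L C0)) (L C0) (L C0) (N (L C0) (L C0) (L C3) (L C0) (N (L C0) (L C0) (L C3) (L C0) (L C0) (L C0) (L C0) (L C0) (L C0)) (L C0) (L C0) (L C0) (L C0)) (L C0))) (L C0) (L C0)) (L C0) (L C0) (N (L C0) (N (L C0) (L C0) (N (L C0) (L C0) (L C0) (L C0) (L C0) (N (L C0) (L C0) (L C0) (L C0) (L C0) (L C0) (N (L C0) (L C0) (L C0) (L C0) (L C0) (L C0) (L C0) (L C0) (L C3)) (L C0) (L C0)) (N (L C0) (L C0) (L C0) (L C0) (L C0) (N (L C0) (L C0) (L C0) (L C0) (L C0) (L C0)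 (L C0) (L C1) (L C1)) (L C0) (N (L C0) (L C0) (L C0) (L C0) (L C0) (L C3) (L C0) (L C0) (L C2)) (N (L C0) (L C0) (L C0) (L C0) (L C0) (L C2) (L C0) (L C2) (L C0))) (L C0) (L C0)) (L C0) (L C0) (N (L C0) (L C0) (N (L C0) (L C0) (L C0) (L C0) (L C0) (L C0) (N (L C0) (L C0) (L C0) (L C0) (L C0) (L C0) (L C0) (L C1) (L C2)) (L C0) (L C0)) (L C0) (L C0) (L C0) (N (L C0) (L C0) (N (L C0) (L C0) (L C0) (L C0) (L C0) (L C0) (L C0) (L C3) (L C3)) (L C0) (L C0) (L C0) (L C0) (N (L C0) (L C0) (L C3) (L C0) (L C0) (L C0) (L C0) (L C0) (L C0)) (N (L C0) (L C0) (L C1) (L C0) (L C0) (L C0) (L C0) (L C3) (L C0))) (L C0) (L C0)) (N (L C0) (L C0) (N (L C0) (L C0) (L C0) (L C0) (L C0) (N (L C0) (L C0) (L C0) (L C0) (L C0) (L C0) (L C0) (L C2) (L C2)) (L C0) (N (L C0) (L C0) (L C0) (L C0) (L C0) (L C0) (L C0) (L C0) (L C0)) (N (L C0) (L C0) (L C0) (L C0) (L C0) (L C0) (L C0) (L C2) (L C0))) (L C0) (L C0) (N (L C0) (L C0) (N (L C0) (L C0) (L C0) (L C0) (L C0) (L C0) (L C0) (L C2) (L C2)) (L C0) (L C0) (L C0) (L C0) (N (L C0) (L C0) (L C2) (L C0) (L C0) (L C0) (L C0) (L C0) (L C0)) (N (L C0) (L C0) (L C3) (L C0) (L C0) (L C0)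 (L C0) (L C2) (L C0))) (L C0) (N (L C0) (L C0) (N (L C0) (L C0) (L C0) (L C0) (L C0) (L C3) (L C0) (L C0) (L C3)) (L C0) (L C0) (N (L C0) (L C0) (L C3) (L C0) (L C0) (L C0) (L C0) (L C0) (L C0)) (L C0) (L C0) (N (L C0) (L C0) (L C2) (L C0) (L C0) (L C2) (L C0) (L C0) (L C0))) (N (L C0) (L C0) (N (L C0) (L C0) (L C0) (L C0) (L C0) (L C3) (L C0) (L C3) (L C0)) (L C0) (L C0) (N (L C0) (L C0) (L C2) (L C0) (L C0) (L C0) (L C0) (L C2) (L C0)) (L C0) (N (L C0) (L C0) (L C1) (L C0) (L C0) (L C2) (L C0) (L C0) (L C0)) (L C0))) (L C0) (L C0)) (L C0) (L C0) (L C0) (N (L C0) (N (L C0) (L C0) (N (L C0) (L C0) (L C0) (L C0) (L C0) (L C0) (N (L C0) (L C0) (L C0) (L C0) (L C0) (L C0) (L C0) (L C2) (L C1)) (L C0) (L C0)) (L C0) (L C0) (L C0) (N (L C0) (L C0) (N (L C0) (L C0) (L C0) (L C0) (L C0) (L C0) (L C0) (L C3) (L C3)) (L C0) (L C0) (L C0) (L C0) (N (L C0) (L C0) (L C0) (L C0) (L C0) (L C0) (L C0) (L C0) (L C0)) (N (L C0) (L C0) (L C3) (L C0) (L C0) (L C0) (L C0) (L C2) (L C0))) (L C0) (L C0)) (L C0) (L C0) (L C0) (L C0) (N (L C0) (N (L C0) (L C0) (N (L C0) (L C0) (L C0) (L C0) (L C0) (L C0) (L C0) (L C1) (L C3)) (L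 C0) (L C0) (L C0) (L C0) (N (L C0) (L C0) (L C1) (L C0) (L C0) (L C0) (L C0) (L C0) (L C2)) (N (L C0) (L C0) (L C2) (L C0) (L C0) (L C0) (L C0) (L C0) (L C0))) (L C0) (L C0) (L C0) (L C0) (L C0) (N (L C0) (N (L C0) (L C0) (L C2) (L C0) (L C0) (L C0) (L C0) (L C0) (L C0)) (L C0) (L C0) (L C0) (L C0) (L C0) (L C0) (L C1)) (N (L C0) (N (L C0) (L C0) (L C1) (L C0) (L C0) (L C0) (L C0) (L C3) (L C0)) (L C0) (L C0) (L C0) (L C0) (L C0) (L C0) (L C0))) (L C0) (L C0)) (N (L C0) (N (L C0) (L C0) (N (L C0) (L C0) (L C0) (L C0) (L C0) (N (L C0) (L C0) (L C0) (L C0) (L C0) (L C0) (L C0) (L C0) (L C0)) (L C0) (N (L C0) (L C0) (L C0) (L C0) (L C0) (L C1) (L C0) (L C0) (L C2)) (N (L C0) (L C0) (L C0) (L C0) (L C0) (L C0) (L C0) (L C0) (L C0))) (L C0) (L C0) (N (L C0) (L C0) (N (L C0) (L C0) (L C0) (L C0) (L C0) (L C0) (L C0) (L C1) (L C0)) (L C0) (L C0) (L C0) (L C0) (N (L C0) (L C0) (L C1) (L C0) (L C0) (L C0) (L C0) (L C0) (L C3)) (N (L C0) (L C0) (L C0) (L C0) (L C0) (L C0) (L C0) (L C0) (L C0))) (L C0) (N (L C0) (L C0) (N (L C0) (L C0) (L C0) (L C0) (L C0) (L C2) (L C0) (L C0) (L C3)) (L C0) (L C0) (N (L C0) (L C0)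 (L C2) (L C0) (L C0) (L C0) (L C0) (L C0) (L C2)) (L C0) (L C0) (N (L C0) (L C0) (L C2) (L C0) (L C0) (L C1) (L C0) (L C0) (L C0))) (N (L C0) (L C0) (N (L C0) (L C0) (L C0) (L C0) (L C0) (L C2) (L C0) (L C1) (L C0)) (L C0) (L C0) (N (L C0) (L C0) (L C2) (L C0) (L C0) (L C0) (L C0) (L C3) (L C0)) (L C0) (N (L C0) (L C0) (L C2) (L C0) (L C0) (L C3) (L C0) (L C0) (L C0)) (L C0))) (L C0) (L C0) (L C0) (N (L C0) (N (L C0) (L C0) (N (L C0) (L C0) (L C0) (L C0) (L C0) (L C0) (L C0) (L C2) (L C1)) (L C0) (L C0) (L C0) (L C0) (N (L C0) (L C0) (L C1) (L C0) (L C0) (L C0) (L C0) (L C0) (L C2)) (N (L C0) (L C0) (L C1) (L C0) (L C0) (L C0) (L C0) (L C0) (L C0))) (L C0) (L C0) (L C0) (L C0) (L C0) (N (L C0) (N (L C0) (L C0) (L C2) (L C0) (L C0) (L C0) (L C0) (L C0) (L C1)) (L C0) (L C0) (L C0) (L C0) (L C0) (L C0) (L C3)) (N (L C0) (N (L C0) (L C0) (L C0) (L C0) (L C0) (L C0) (L C0) (L C1) (L C0)) (L C0) (L C0) (L C0) (L C0) (L C0) (L C2) (L C0))) (L C0) (N (L C0) (N (L C0) (L C0) (N (L C0) (L C0) (L C0) (L C0) (L C0) (L C0) (L C0) (L C0) (L C2)) (L C0) (L C0) (N (L C0) (L C0) (L C1) (L C0) (L C0) (L C0) (L C0) (L C0)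 (L C3)) (L C0) (L C0) (N (L C0) (L C0) (L C3) (L C0) (L C0) (L C0) (L C0) (L C0) (L C0))) (L C0) (L C0) (L C0) (N (L C0) (N (L C0) (L C0) (L C1) (L C0) (L C0) (L C0) (L C0) (L C0) (L C2)) (L C0) (L C0) (L C0) (L C0) (L C0) (L C0) (L C1)) (L C0) (L C0) (N (L C0) (N (L C0) (L C0) (L C0) (L C0) (L C0) (L C2) (L C0) (L C0) (L C0)) (L C0) (L C0) (L C0) (L C0) (L C0) (L C0) (L C0))) (N (L C0) (N (L C0) (L C0) (N (L C0) (L C0) (L C0) (L C0) (L C0) (L C1) (L C0) (L C0) (L C0)) (L C0) (L C0) (N (L C0) (L C0) (L C0) (L C0) (L C0) (L C0) (L C0) (L C1) (L C0)) (L C0) (N (L C0) (L C0) (L C1) (L C0) (L C0) (L C0) (L C0) (L C0) (L C0)) (L C0)) (L C0) (L C0) (L C0) (N (L C0) (N (L C0) (L C0) (L C3) (L C0) (L C0) (L C0) (L C0) (L C1) (L C0)) (L C0) (L C0) (L C0) (L C0) (L C0) (L C0) (L C0)) (L C0) (N (L C0) (N (L C0) (L C0) (L C1) (L C0) (L C0) (L C0) (L C0) (L C0) (L C0)) (L C0) (L C0) (L C0) (L C2) (L C0) (L C0) (L C0)) (L C0))) (L C0) (L C0)) (L C0) (N (L C0) (N (L C0) (L C0) (N (L C0) (L C0) (L C0) (L C0) (N (L C0) (L C0) (L C0) (L C0) (L C0) (N (L C0) (L C0) (L C0) (L C0) (L C0) (L C0) (L C0) (L C0) (L C1)) (L C0)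 (N (L C0) (L C0) (L C0) (L C0) (L C0) (L C2) (L C0) (L C0) (L C1)) (N (L C0) (L C0) (L C0) (L C0) (L C0) (L C2) (L C0) (L C0) (L C0))) (L C0) (L C0) (N (L C0) (L C0) (L C0) (L C0) (N (L C0) (L C0) (L C0) (L C0) (L C0) (L C1) (L C0) (L C0) (L C2)) (L C0) (L C0) (L C0) (L C1)) (N (L C0) (L C0) (L C0) (L C0) (N (L C0) (L C0) (L C0) (L C0) (L C0) (L C1) (L C0) (L C2) (L C0)) (L C0) (L C0) (L C1) (L C0))) (L C0) (N (L C0) (L C0) (N (L C0) (L C0) (L C0) (L C0) (L C0) (N (L C0) (L C0) (L C0) (L C0) (L C0) (L C0) (L C0) (L C2) (L C1)) (L C0) (N (L C0) (L C0) (L C0) (L C0) (L C0) (L C2) (L C0) (L C0) (L C3)) (N (L C0) (L C0) (L C0) (L C0) (L C0) (L C3) (L C0) (L C1) (L C0))) (L C0) (L C0) (N (L C0) (L C0) (N (L C0) (L C0) (L C0) (L C0) (L C0) (L C0) (L C0) (L C3) (L C2)) (L C0) (L C0) (L C0) (L C0) (N (L C0) (L C0) (L C3) (L C0) (L C0) (L C0) (L C0) (L C0) (L C2)) (N (L C0) (L C0) (L C1) (L C0) (L C0) (L C0) (L C0) (L C2) (L C0))) (L C0) (N (L C0) (L C0) (N (L C0) (L C0) (L C0) (L C0) (L C0) (L C0) (L C0) (L C0) (L C0)) (L C0) (L C0) (N (L C0) (L C0) (L C1) (L C0) (L C0) (L C0) (L C0) (L C0) (L C0)) (L C0) (L C0)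 (N (L C0) (L C0) (L C1) (L C0) (L C0) (L C0) (L C0) (L C0) (L C0))) (N (L C0) (L C0) (N (L C0) (L C0) (L C0) (L C0) (L C0) (L C0) (L C0) (L C1) (L C0)) (L C0) (L C0) (N (L C0) (L C0) (L C2) (L C0) (L C0) (L C0) (L C0) (L C2) (L C0)) (L C0) (N (L C0) (L C0) (L C0) (L C0) (L C0) (L C1) (L C0) (L C0) (L C0)) (L C0))) (L C0) (L C0) (N (L C0) (L C0) (N (L C0) (L C0) (L C0) (L C0) (N (L C0) (L C0) (L C0) (L C0) (L C0) (L C1) (L C0) (L C0) (L C3)) (L C0) (L C0) (L C0) (L C3)) (L C0) (N (L C0) (L C0) (N (L C0) (L C0) (L C0) (L C0) (L C0) (L C1) (L C0) (L C0) (L C1)) (L C0) (L C0) (N (L C0) (L C0) (L C2) (L C0) (L C0) (L C0) (L C0) (L C0) (L C1)) (L C0) (L C0) (N (L C0) (L C0) (L C3) (L C0) (L C0) (L C1) (L C0) (L C0) (L C0))) (L C0) (L C0) (L C0) (N (L C0) (L C0) (L C2) (L C0) (N (L C0) (L C0) (L C3) (L C0) (L C0) (L C2) (L C0) (L C0) (L C0)) (L C0) (L C0) (L C0) (L C0))) (N (L C0) (L C0) (N (L C0) (L C0) (L C0) (L C0) (N (L C0) (L C0) (L C0) (L C0) (L C0) (L C3) (L C0) (L C3) (L C0)) (L C0) (L C0) (L C2) (L C0)) (L C0) (N (L C0) (L C0) (N (L C0) (L C0) (L C0) (L C0) (L C0) (L C3) (L C0) (L C0) (L C0)) (L C0) (L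 C0) (N (L C0) (L C0) (L C0) (L C0) (L C0) (L C0) (L C0) (L C3) (L C0)) (L C0) (N (L C0) (L C0) (L C2) (L C0) (L C0) (L C3) (L C0) (L C0) (L C0)) (L C0)) (L C0) (L C0) (N (L C0) (L C0) (L C3) (L C0) (N (L C0) (L C0) (L C3) (L C0) (L C0) (L C2) (L C0) (L C0) (L C0)) (L C0) (L C0) (L C0) (L C0)) (L C0))) (L C0) (L C0) (N (L C0) (N (L C0) (L C0) (N (L C0) (L C0) (L C0) (L C0) (L C0) (N (L C0) (L C0) (L C0) (L C0) (L C0) (L C0) (L C0) (L C1) (L C3)) (L C0) (N (L C0) (L C0) (L C0) (L C0) (L C0) (L C1) (L C0) (L C0) (L C0)) (N (L C0) (L C0) (L C0) (L C0) (L C0) (L C0) (L C0) (L C0) (L C0))) (L C0) (L C0) (N (L C0) (L C0) (N (L C0) (L C0) (L C0) (L C0) (L C0) (L C0) (L C0) (L C3) (L C3)) (L C0) (L C0) (L C0) (L C0) (N (L C0) (L C0) (L C2) (L C0) (L C0) (L C0) (L C0) (L C0) (L C1)) (N (L C0) (L C0) (L C2) (L C0) (L C0) (L C0) (L C0) (L C3) (L C0))) (L C0) (N (L C0) (L C0) (N (L C0) (L C0) (L C0) (L C0) (L C0) (L C3) (L C0) (L C0) (L C3)) (L C0) (L C0) (N (L C0) (L C0) (L C2) (L C0) (L C0) (L C0) (L C0) (L C0) (L C2)) (L C0) (L C0) (N (L C0) (L C0) (L C3) (L C0) (L C0) (L C3) (L C0) (L C0) (L C0))) (N (L C0) (L C0)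 (N (L C0) (L C0) (L C0) (L C0) (L C0) (L C2) (L C0) (L C0) (L C0)) (L C0) (L C0) (N (L C0) (L C0) (L C1) (L C0) (L C0) (L C0) (L C0) (L C3) (L C0)) (L C0) (N (L C0) (L C0) (L C1) (L C0) (L C0) (L C2) (L C0) (L C0) (L C0)) (L C0))) (L C0) (L C0) (L C0) (N (L C0) (N (L C0) (L C0) (N (L C0) (L C0) (L C0) (L C0) (L C0) (L C0) (L C0) (L C3) (L C1)) (L C0) (L C0) (L C0) (L C0) (N (L C0) (L C0) (L C0) (L C0) (L C0) (L C0) (L C0) (L C0) (L C3)) (N (L C0) (L C0) (L C3) (L C0) (L C0) (L C0) (L C0) (L C1) (L C0))) (L C0) (L C0) (L C0) (L C0) (L C0) (N (L C0) (N (L C0) (L C0) (L C3) (L C0) (L C0) (L C0) (L C0) (L C0) (L C3)) (L C0) (L C0) (L C0) (L C0) (L C0) (L C0) (L C3)) (N (L C0) (N (L C0) (L C0) (L C0) (L C0) (L C0) (L C0) (L C0) (L C2) (L C0)) (L C0) (L C0) (L C0) (L C0) (L C0) (L C3) (L C0))) (L C0) (N (L C0) (N (L C0) (L C0) (N (L C0) (L C0) (L C0) (L C0) (L C0) (L C0) (L C0) (L C0) (L C3)) (L C0) (L C0) (N (L C0) (L C0) (L C3) (L C0) (L C0) (L C0) (L C0) (L C0) (L C3)) (L C0) (L C0) (N (L C0) (L C0) (L C0) (L C0) (L C0) (L C2) (L C0) (L C0) (L C0))) (L C0) (L C0) (L C0) (N (L C0) (N (L C0) (L C0) (L C0) (L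 C0) (L C0) (L C0) (L C0) (L C0) (L C0)) (L C0) (L C0) (L C0) (L C0) (L C0) (L C0) (L C0)) (L C0) (L C0) (N (L C0) (N (L C0) (L C0) (L C3) (L C0) (L C0) (L C0) (L C0) (L C0) (L C0)) (L C0) (L C0) (L C0) (L C0) (L C0) (L C0) (L C0))) (N (L C0) (N (L C0) (L C0) (N (L C0) (L C0) (L C0) (L C0) (L C0) (L C3) (L C0) (L C0) (L C0)) (L C0) (L C0) (N (L C0) (L C0) (L C2) (L C0) (L C0) (L C0) (L C0) (L C2) (L C0)) (L C0) (N (L C0) (L C0) (L C0) (L C0) (L C0) (L C3) (L C0) (L C0) (L C0)) (L C0)) (L C0) (L C0) (L C0) (N (L C0) (N (L C0) (L C0) (L C0) (L C0) (L C0) (L C0) (L C0) (L C2) (L C0)) (L C0) (L C0) (L C0) (L C0) (L C0) (L C2) (L C0)) (L C0) (N (L C0) (N (L C0) (L C0) (L C3) (L C0) (L C0) (L C1) (L C0) (L C0) (L C0)) (L C0) (L C0) (L C0) (L C2) (L C0) (L C0) (L C0)) (L C0))) (L C0) (L C0) (N (L C0) (N (L C0) (L C0) (N (L C0) (L C0) (L C0) (L C0) (N (L C0) (L C0) (L C0) (L C0) (L C0) (L C0) (L C0) (L C0) (L C0)) (L C0) (L C0) (L C0) (L C3)) (L C0) (N (L C0) (L C0) (N (L C0) (L C0) (L C0) (L C0) (L C0) (L C1) (L C0) (L C0) (L C0)) (L C0) (L C0) (N (L C0) (L C0) (L C0) (L C0) (L C0) (L C0) (L C0) (L C0) (L C0))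 (L C0) (L C0) (N (L C0) (L C0) (L C0) (L C0) (L C0) (L C2) (L C0) (L C0) (L C0))) (L C0) (L C0) (L C0) (N (L C0) (L C0) (L C2) (L C0) (N (L C0) (L C0) (L C2) (L C0) (L C0) (L C2) (L C0) (L C0) (L C0)) (L C0) (L C0) (L C0) (L C0))) (L C0) (L C0) (N (L C0) (N (L C0) (L C0) (N (L C0) (L C0) (L C0) (L C0) (L C0) (L C1) (L C0) (L C0) (L C1)) (L C0) (L C0) (N (L C0) (L C0) (L C1) (L C0) (L C0) (L C0) (L C0) (L C0) (L C1)) (L C0) (L C0) (N (L C0) (L C0) (L C2) (L C0) (L C0) (L C1) (L C0) (L C0) (L C0))) (L C0) (L C0) (L C0) (N (L C0) (N (L C0) (L C0) (L C3) (L C0) (L C0) (L C0) (L C0) (L C0) (L C3)) (L C0) (L C0) (L C0) (L C0) (L C0) (L C0) (L C0)) (L C0) (L C0) (N (L C0) (N (L C0) (L C0) (L C0) (L C0) (L C0) (L C3) (L C0) (L C0) (L C0)) (L C0) (L C0) (L C0) (L C0) (L C0) (L C0) (L C0))) (L C0) (L C0) (L C0) (N (L C0) (N (L C0) (L C0) (L C0) (L C0) (N (L C0) (L C0) (L C1) (L C0) (L C0) (L C0) (L C0) (L C0) (L C0)) (L C0) (L C0) (L C0) (L C0)) (L C0) (L C0) (N (L C0) (N (L C0) (L C0) (L C2) (L C0) (L C0) (L C3) (L C0) (L C0) (L C0)) (L C0) (L C0) (L C0) (L C3) (L C0) (L C0) (L C0)) (L C0) (L C0) (L C0) (L C0)))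 (N (L C0) (N (L C0) (L C0) (N (L C0) (L C0) (L C0) (L C0) (N (L C0) (L C0) (L C0) (L C0) (L C0) (L C2) (L C0) (L C2) (L C0)) (L C0) (L C0) (L C1) (L C0)) (L C0) (N (L C0) (L C0) (N (L C0) (L C0) (L C0) (L C0) (L C0) (L C0) (L C0) (L C1) (L C0)) (L C0) (L C0) (N (L C0) (L C0) (L C2) (L C0) (L C0) (L C0) (L C0) (L C0) (L C0)) (L C0) (N (L C0) (L C0) (L C3) (L C0) (L C0) (L C2) (L C0) (L C0) (L C0)) (L C0)) (L C0) (L C0) (N (L C0) (L C0) (L C2) (L C0) (N (L C0) (L C0) (L C1) (L C0) (L C0) (L C1) (L C0) (L C0) (L C0)) (L C0) (L C0) (L C0) (L C0)) (L C0)) (L C0) (L C0) (N (L C0) (N (L C0) (L C0) (N (L C0) (L C0) (L C0) (L C0) (L C0) (L C3) (L C0) (L C1) (L C0)) (L C0) (L C0) (N (L C0) (L C0) (L C3) (L C0) (L C0) (L C0) (L C0) (L C1) (L C0)) (L C0) (N (L C0) (L C0) (L C3) (L C0) (L C0) (L C1) (L C0) (L C0) (L C0)) (L C0)) (L C0) (L C0) (L C0) (N (L C0) (N (L C0) (L C0) (L C3) (L C0) (L C0) (L C0) (L C0) (L C0) (L C0)) (L C0) (L C0) (L C0) (L C0) (L C0) (L C1) (L C0)) (L C0) (N (L C0) (N (L C0) (L C0) (L C3) (L C0) (L C0) (L C0) (L C0) (L C0) (L C0)) (L C0) (L C0) (L C0) (L C2) (L C0) (L C0) (L C0)) (L C0))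 (L C0) (L C0) (N (L C0) (N (L C0) (L C0) (L C3) (L C0) (N (L C0) (L C0) (L C2) (L C0) (L C0) (L C2) (L C0) (L C0) (L C0)) (L C0) (L C0) (L C0) (L C0)) (L C0) (L C0) (N (L C0) (N (L C0) (L C0) (L C3) (L C0) (L C0) (L C3) (L C0) (L C0) (L C0)) (L C0) (L C0) (L C0) (L C0) (L C0) (L C0) (L C0)) (L C0) (L C0) (L C0) (L C0)) (L C0))) (L C0) (L C0)) (L C0) (L C0) (L C0) (L C0) (L C0)) (L C0) (L C0) (L C0) (L C0) (L C0) (L C0) (L C0) (L C0))"
definition Tab :: "d list \<Rightarrow> col" where "Tab r = lk tr r"
lemma Tab_eq: "Tab r = lk (N (N (L C0) (N (L C0) (L C0) (N (L C0) (L C0) (L C0) (N (L C0) (L C0) (L C0) (L C0) (N (L C0) (L C0) (L C0) (L C0) (L C0) (N (L C0) (L C0) (L C0) (L C0) (L C0) (L C0) (N (L C0) (L C0) (L C0) (L C0) (L C0) (L C0) (L C0) (L C3) (L C0)) (L C0) (L C0)) (N (L C0) (L C0) (L C0) (L C0) (L C0) (N (L C0) (L C0) (L C0) (L C0) (L C0) (L C0) (L C0) (L C0) (L C0)) (L C0) (N (L C0) (L C0) (L C0) (L C0) (L C0) (L C0) (L C0) (L C0) (L C2)) (N (L C0) (L C0) (L C0) (L C0) (L C0) (L C3) (L C0) (L C3) (L C0))) (L C0) (L C0)) (L C0) (N (L C0) (L C0) (L C0) (L C0) (N (L C0) (L C0) (L C0) (L C0) (L C0) (N (L C0) (L C0)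 (L C0) (L C0) (L C0) (L C0) (L C0) (L C3) (L C2)) (L C0) (N (L C0) (L C0) (L C0) (L C0) (L C0) (L C2) (L C0) (L C0) (L C3)) (N (L C0) (L C0) (L C0) (L C0) (L C0) (L C2) (L C0) (L C2) (L C0))) (L C0) (L C0) (N (L C0) (L C0) (L C0) (L C0) (N (L C0) (L C0) (L C0) (L C0) (L C0) (L C1) (L C0) (L C0) (L C0)) (L C0) (L C0) (L C0) (L C0)) (N (L C0) (L C0) (L C0) (L C0) (N (L C0) (L C0) (L C0) (L C0) (L C0) (L C1) (L C0) (L C3) (L C0)) (L C0) (L C0) (L C1) (L C0))) (L C0) (L C0)) (L C0) (L C0) (L C0) (L C0) (L C0)) (N (L C0) (L C0) (N (L C0) (L C0) (L C0) (L C0) (N (L C0) (L C0) (L C0) (L C0) (L C0) (N (L C0) (L C0) (L C0) (L C0) (L C0) (L C0) (N (L C0) (L C0) (L C0) (L C0) (L C0) (L C0) (L C0) (L C3) (L C0)) (L C0) (L C0)) (N (L C0) (L C0) (L C0) (L C0) (L C0) (N (L C0) (L C0) (L C0) (L C0) (L C0) (L C0) (L C0) (L C2) (L C2)) (L C0) (N (L C0) (L C0) (L C0) (L C0) (L C0) (L C0) (L C0) (L C0) (L C1)) (N (L C0) (L C0) (L C0) (L C0) (L C0) (L C0) (L C0) (L C1) (L C0))) (L C0) (L C0)) (L C0) (N (L C0) (L C0) (L C0) (L C0) (N (L C0) (L C0) (L C0) (L C0) (L C0) (N (L C0) (L C0) (L C0) (L C0) (L C0) (L C0) (L C0) (L C2)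 (L C1)) (L C0) (N (L C0) (L C0) (L C0) (L C0) (L C0) (L C1) (L C0) (L C0) (L C1)) (N (L C0) (L C0) (L C0) (L C0) (L C0) (L C2) (L C0) (L C1) (L C0))) (L C0) (L C0) (N (L C0) (L C0) (L C0) (L C0) (N (L C0) (L C0) (L C0) (L C0) (L C0) (L C1) (L C0) (L C0) (L C3)) (L C0) (L C0) (L C0) (L C3)) (N (L C0) (L C0) (L C0) (L C0) (N (L C0) (L C0) (L C0) (L C0) (L C0) (L C1) (L C0) (L C0) (L C0)) (L C0) (L C0) (L C3) (L C0))) (L C0) (L C0)) (L C0) (N (L C0) (L C0) (N (L C0) (L C0) (L C0) (L C0) (L C0) (N (L C0) (L C0) (L C0) (L C0) (L C0) (L C0) (N (L C0) (L C0) (L C0) (L C0) (L C0) (L C0) (L C0) (L C1) (L C1)) (L C0) (L C0)) (N (L C0) (L C0) (L C0) (L C0) (L C0) (N (L C0) (L C0) (L C0) (L C0) (L C0) (L C0) (L C0) (L C0) (L C0)) (L C0) (N (L C0) (L C0) (L C0) (L C0) (L C0) (L C3) (L C0) (L C0) (L C2)) (N (L C0) (L C0) (L C0) (L C0) (L C0) (L C3) (L C0) (L C3) (L C0))) (L C0) (L C0)) (L C0) (L C0) (N (L C0) (L C0) (N (L C0) (L C0) (L C0) (L C0) (L C0) (L C0) (N (L C0) (L C0) (L C0) (L C0) (L C0) (L C0) (L C0) (L C3) (L C0)) (L C0) (L C0)) (L C0) (L C0) (L C0) (N (L C0) (L C0) (N (L C0) (L C0) (L C0) (L C0) (L C0)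 (L C0) (L C0) (L C1) (L C2)) (L C0) (L C0) (L C0) (L C0) (N (L C0) (L C0) (L C1) (L C0) (L C0) (L C0) (L C0) (L C0) (L C0)) (N (L C0) (L C0) (L C2) (L C0) (L C0) (L C0) (L C0) (L C1) (L C0))) (L C0) (L C0)) (N (L C0) (L C0) (N (L C0) (L C0) (L C0) (L C0) (L C0) (N (L C0) (L C0) (L C0) (L C0) (L C0) (L C0) (L C0) (L C0) (L C0)) (L C0) (N (L C0) (L C0) (L C0) (L C0) (L C0) (L C2) (L C0) (L C0) (L C0)) (N (L C0) (L C0) (L C0) (L C0) (L C0) (L C2) (L C0) (L C3) (L C0))) (L C0) (L C0) (N (L C0) (L C0) (N (L C0) (L C0) (L C0) (L C0) (L C0) (L C0) (L C0) (L C1) (L C0)) (L C0) (L C0) (L C0) (L C0) (N (L C0) (L C0) (L C3) (L C0) (L C0) (L C0) (L C0) (L C0) (L C2)) (N (L C0) (L C0) (L C0) (L C0) (L C0) (L C0) (L C0) (L C3) (L C0))) (L C0) (N (L C0) (L C0) (N (L C0) (L C0) (L C0) (L C0) (L C0) (L C1) (L C0) (L C0) (L C1)) (L C0) (L C0) (N (L C0) (L C0) (L C3) (L C0) (L C0) (L C0) (L C0) (L C0) (L C3)) (L C0) (L C0) (N (L C0) (L C0) (L C2) (L C0) (L C0) (L C1) (L C0) (L C0) (L C0))) (N (L C0) (L C0) (N (L C0) (L C0) (L C0) (L C0) (L C0) (L C2) (L C0) (L C0) (L C0)) (L C0) (L C0) (N (L C0) (L C0) (L C3) (L C0) (L C0)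 (L C0) (L C0) (L C0) (L C0)) (L C0) (N (L C0) (L C0) (L C2) (L C0) (L C0) (L C1) (L C0) (L C0) (L C0)) (L C0))) (L C0) (L C0)) (L C0) (N (L C0) (L C0) (N (L C0) (L C0) (L C0) (L C0) (N (L C0) (L C0) (L C0) (L C0) (L C0) (N (L C0) (L C0) (L C0) (L C0) (L C0) (L C0) (L C0) (L C3) (L C0)) (L C0) (N (L C0) (L C0) (L C0) (L C0) (L C0) (L C3) (L C0) (L C0) (L C0)) (N (L C0) (L C0) (L C0) (L C0) (L C0) (L C2) (L C0) (L C1) (L C0))) (L C0) (L C0) (N (L C0) (L C0) (L C0) (L C0) (N (L C0) (L C0) (L C0) (L C0) (L C0) (L C0) (L C0) (L C0) (L C3)) (L C0) (L C0) (L C0) (L C0)) (N (L C0) (L C0) (L C0) (L C0) (N (L C0) (L C0) (L C0) (L C0) (L C0) (L C0) (L C0) (L C3) (L C0)) (L C0) (L C0) (L C3) (L C0))) (L C0) (N (L C0) (L C0) (N (L C0) (L C0) (L C0) (L C0) (L C0) (N (L C0) (L C0) (L C0) (L C0) (L C0) (L C0) (L C0) (L C3) (L C3)) (L C0) (N (L C0) (L C0) (L C0) (L C0) (L C0) (L C1) (L C0) (L C0) (L C0)) (N (L C0) (L C0) (L C0) (L C0) (L C0) (L C1) (L C0) (L C0) (L C0))) (L C0) (L C0) (N (L C0) (L C0) (N (L C0) (L C0) (L C0) (L C0) (L C0) (L C0) (L C0) (L C0) (L C1)) (L C0) (L C0) (L C0) (L C0) (N (L C0) (L C0) (L C1) (L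 C0) (L C0) (L C0) (L C0) (L C0) (L C0)) (N (L C0) (L C0) (L C2) (L C0) (L C0) (L C0) (L C0) (L C1) (L C0))) (L C0) (N (L C0) (L C0) (N (L C0) (L C0) (L C0) (L C0) (L C0) (L C1) (L C0) (L C0) (L C2)) (L C0) (L C0) (N (L C0) (L C0) (L C2) (L C0) (L C0) (L C0) (L C0) (L C0) (L C2)) (L C0) (L C0) (N (L C0) (L C0) (L C0) (L C0) (L C0) (L C0) (L C0) (L C0) (L C0))) (N (L C0) (L C0) (N (L C0) (L C0) (L C0) (L C0) (L C0) (L C0) (L C0) (L C1) (L C0)) (L C0) (L C0) (N (L C0) (L C0) (L C2) (L C0) (L C0) (L C0) (L C0) (L C2) (L C0)) (L C0) (N (L C0) (L C0) (L C3) (L C0) (L C0) (L C0) (L C0) (L C0) (L C0)) (L C0))) (L C0) (L C0) (N (L C0) (L C0) (N (L C0) (L C0) (L C0) (L C0) (N (L C0) (L C0) (L C0) (L C0) (L C0) (L C0) (L C0) (L C0) (L C2)) (L C0) (L C0) (L C0) (L C0)) (L C0) (N (L C0) (L C0) (N (L C0) (L C0) (L C0) (L C0) (L C0) (L C1) (L C0) (L C0) (L C3)) (L C0) (L C0) (N (L C0) (L C0) (L C3) (L C0) (L C0) (L C0) (L C0) (L C0) (L C1)) (L C0) (L C0) (N (L C0) (L C0) (L C1) (L C0) (L C0) (L C3) (L C0) (L C0) (L C0))) (L C0) (L C0) (L C0) (N (L C0) (L C0) (L C1) (L C0) (N (L C0) (L C0) (L C1) (L C0) (L C0) (L C3) (L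 C0) (L C0) (L C0)) (L C0) (L C0) (L C0) (L C0))) (N (L C0) (L C0) (N (L C0) (L C0) (L C0) (L C0) (N (L C0) (L C0) (L C0) (L C0) (L C0) (L C1) (L C0) (L C2) (L C0)) (L C0) (L C0) (L C1) (L C0)) (L C0) (N (L C0) (L C0) (N (L C0) (L C0) (L C0) (L C0) (L C0) (L C1) (L C0) (L C3) (L C0)) (L C0) (L C0) (N (L C0) (L C0) (L C3) (L C0) (L C0) (L C0) (L C0) (L C0) (L C0)) (L C0) (N (L C0) (L C0) (L C0) (L C0) (L C0) (L C0) (L C0) (L C0) (L C0)) (L C0)) (L C0) (L C0) (N (L C0) (L C0) (L C0) (L C0) (N (L C0) (L C0) (L C0) (L C0) (L C0) (L C0) (L C0) (L C0) (L C0)) (L C0) (L C0) (L C0) (L C0)) (L C0))) (L C0) (L C0)) (L C0) (L C0) (L C0) (L C0) (L C0)) (L C0) (N (L C0) (N (L C0) (L C0) (N (L C0) (L C0) (L C0) (L C0) (N (L C0) (L C0) (L C0) (L C0) (L C0) (N (L C0) (L C0) (L C0) (L C0) (L C0) (L C0) (N (L C0) (L C0) (L C0) (L C0) (L C0) (L C0) (L C0) (L C3) (L C0)) (L C0) (L C0)) (N (L C0) (L C0) (L C0) (L C0) (L C0) (N (L C0) (L C0) (L C0) (L C0) (L C0) (L C0) (L C0) (L C2) (L C2)) (L C0) (N (L C0) (L C0) (L C0) (L C0) (L C0) (L C3) (L C0) (L C0) (L C2)) (N (L C0) (L C0) (L C0) (L C0) (L C0) (L C0) (L C0) (L C2) (L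 C0))) (L C0) (L C0)) (L C0) (N (L C0) (L C0) (L C0) (L C0) (N (L C0) (L C0) (L C0) (L C0) (L C0) (N (L C0) (L C0) (L C0) (L C0) (L C0) (L C0) (L C0) (L C1) (L C1)) (L C0) (N (L C0) (L C0) (L C0) (L C0) (L C0) (L C3) (L C0) (L C0) (L C2)) (N (L C0) (L C0) (L C0) (L C0) (L C0) (L C2) (L C0) (L C1) (L C0))) (L C0) (L C0) (N (L C0) (L C0) (L C0) (L C0) (N (L C0) (L C0) (L C0) (L C0) (L C0) (L C0) (L C0) (L C0) (L C3)) (L C0) (L C0) (L C0) (L C3)) (N (L C0) (L C0) (L C0) (L C0) (N (L C0) (L C0) (L C0) (L C0) (L C0) (L C0) (L C0) (L C0) (L C0)) (L C0) (L C0) (L C2) (L C0))) (L C0) (L C0)) (L C0) (N (L C0) (L C0) (N (L C0) (L C0) (L C0) (L C0) (L C0) (N (L C0) (L C0) (L C0) (L C0) (L C0) (L C0) (N (L C0) (L C0) (L C0) (L C0) (L C0) (L C0) (L C0) (L C0) (L C0)) (L C0) (L C0)) (N (L C0) (L C0) (L C0) (L C0) (L C0) (N (L C0) (L C0) (L C0) (L C0) (L C0) (L C0) (L C0) (L C1) (L C1)) (L C0) (N (L C0) (L C0) (L C0) (L C0) (L C0) (L C0) (L C0) (L C0) (L C1)) (N (L C0) (L C0) (L C0) (L C0) (L C0) (L C0) (L C0) (L C0) (L C0))) (L C0) (L C0)) (L C0) (L C0) (N (L C0) (L C0) (N (L C0) (L C0) (L C0) (L C0) (L C0) (L C0) (N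 (L C0) (L C0) (L C0) (L C0) (L C0) (L C0) (L C0) (L C1) (L C0)) (L C0) (L C0)) (L C0) (L C0) (L C0) (N (L C0) (L C0) (N (L C0) (L C0) (L C0) (L C0) (L C0) (L C0) (L C0) (L C3) (L C0)) (L C0) (L C0) (L C0) (L C0) (N (L C0) (L C0) (L C1) (L C0) (L C0) (L C0) (L C0) (L C0) (L C3)) (N (L C0) (L C0) (L C0) (L C0) (L C0) (L C0) (L C0) (L C0) (L C0))) (L C0) (L C0)) (N (L C0) (L C0) (N (L C0) (L C0) (L C0) (L C0) (L C0) (N (L C0) (L C0) (L C0) (L C0) (L C0) (L C0) (L C0) (L C0) (L C0)) (L C0) (N (L C0) (L C0) (L C0) (L C0) (L C0) (L C2) (L C0) (L C0) (L C1)) (N (L C0) (L C0) (L C0) (L C0) (L C0) (L C1) (L C0) (L C2) (L C0))) (L C0) (L C0) (N (L C0) (L C0) (N (L C0) (L C0) (L C0) (L C0) (L C0) (L C0) (L C0) (L C2) (L C2)) (L C0) (L C0) (L C0) (L C0) (N (L C0) (L C0) (L C1) (L C0) (L C0) (L C0) (L C0) (L C0) (L C2)) (N (L C0) (L C0) (L C2) (L C0) (L C0) (L C0) (L C0) (L C3) (L C0))) (L C0) (N (L C0) (L C0) (N (L C0) (L C0) (L C0) (L C0) (L C0) (L C2) (L C0) (L C0) (L C2)) (L C0) (L C0) (N (L C0) (L C0) (L C1) (L C0) (L C0) (L C0) (L C0) (L C0) (L C0)) (L C0) (L C0) (N (L C0) (L C0) (L C0) (L C0) (L C0) (L C2) (L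 C0) (L C0) (L C0))) (N (L C0) (L C0) (N (L C0) (L C0) (L C0) (L C0) (L C0) (L C2) (L C0) (L C2) (L C0)) (L C0) (L C0) (N (L C0) (L C0) (L C0) (L C0) (L C0) (L C0) (L C0) (L C0) (L C0)) (L C0) (N (L C0) (L C0) (L C3) (L C0) (L C0) (L C3) (L C0) (L C0) (L C0)) (L C0))) (L C0) (L C0)) (L C0) (N (L C0) (L C0) (N (L C0) (L C0) (L C0) (L C0) (N (L C0) (L C0) (L C0) (L C0) (L C0) (N (L C0) (L C0) (L C0) (L C0) (L C0) (L C0) (L C0) (L C2) (L C3)) (L C0) (N (L C0) (L C0) (L C0) (L C0) (L C0) (L C3) (L C0) (L C0) (L C2)) (N (L C0) (L C0) (L C0) (L C0) (L C0) (L C3) (L C0) (L C3) (L C0))) (L C0) (L C0) (N (L C0) (L C0) (L C0) (L C0) (N (L C0) (L C0) (L C0) (L C0) (L C0) (L C2) (L C0) (L C0) (L C3)) (L C0) (L C0) (L C0) (L C2)) (N (L C0) (L C0) (L C0) (L C0) (N (L C0) (L C0) (L C0) (L C0) (L C0) (L C2) (L C0) (L C3) (L C0)) (L C0) (L C0) (L C3) (L C0))) (L C0) (N (L C0) (L C0) (N (L C0) (L C0) (L C0) (L C0) (L C0) (N (L C0) (L C0) (L C0) (L C0) (L C0) (L C0) (L C0) (L C3) (L C3)) (L C0) (N (L C0) (L C0) (L C0) (L C0) (L C0) (L C0) (L C0) (L C0) (L C2)) (N (L C0) (L C0) (L C0) (L C0) (L C0) (L C1) (L C0) (L C3) (L C0)))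 (L C0) (L C0) (N (L C0) (L C0) (N (L C0) (L C0) (L C0) (L C0) (L C0) (L C0) (L C0) (L C1) (L C1)) (L C0) (L C0) (L C0) (L C0) (N (L C0) (L C0) (L C1) (L C0) (L C0) (L C0) (L C0) (L C0) (L C2)) (N (L C0) (L C0) (L C1) (L C0) (L C0) (L C0) (L C0) (L C2) (L C0))) (L C0) (N (L C0) (L C0) (N (L C0) (L C0) (L C0) (L C0) (L C0) (L C3) (L C0) (L C0) (L C3)) (L C0) (L C0) (N (L C0) (L C0) (L C3) (L C0) (L C0) (L C0) (L C0) (L C0) (L C0)) (L C0) (L C0) (N (L C0) (L C0) (L C0) (L C0) (L C0) (L C2) (L C0) (L C0) (L C0))) (N (L C0) (L C0) (N (L C0) (L C0) (L C0) (L C0) (L C0) (L C3) (L C0) (L C2) (L C0)) (L C0) (L C0) (N (L C0) (L C0) (L C2) (L C0) (L C0) (L C0) (L C0) (L C1) (L C0)) (L C0) (N (L C0) (L C0) (L C1) (L C0) (L C0) (L C3) (L C0) (L C0) (L C0)) (L C0))) (L C0) (L C0) (N (L C0) (L C0) (N (L C0) (L C0) (L C0) (L C0) (N (L C0) (L C0) (L C0) (L C0) (L C0) (L C3) (L C0) (L C0) (L C0)) (L C0) (L C0) (L C0) (L C0)) (L C0) (N (L C0) (L C0) (N (L C0) (L C0) (L C0) (L C0) (L C0) (L C0) (L C0) (L C0) (L C1)) (L C0) (L C0) (N (L C0) (L C0) (L C1) (L C0) (L C0) (L C0) (L C0) (L C0) (L C3)) (L C0) (L C0) (N (L C0) (L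 C0) (L C3) (L C0) (L C0) (L C0) (L C0) (L C0) (L C0))) (L C0) (L C0) (L C0) (N (L C0) (L C0) (L C2) (L C0) (N (L C0) (L C0) (L C2) (L C0) (L C0) (L C1) (L C0) (L C0) (L C0)) (L C0) (L C0) (L C0) (L C0))) (N (L C0) (L C0) (N (L C0) (L C0) (L C0) (L C0) (N (L C0) (L C0) (L C0) (L C0) (L C0) (L C2) (L C0) (L C0) (L C0)) (L C0) (L C0) (L C3) (L C0)) (L C0) (N (L C0) (L C0) (N (L C0) (L C0) (L C0) (L C0) (L C0) (L C1) (L C0) (L C0) (L C0)) (L C0) (L C0) (N (L C0) (L C0) (L C1) (L C0) (L C0) (L C0) (L C0) (L C2) (L C0)) (L C0) (N (L C0) (L C0) (L C2) (L C0) (L C0) (L C1) (L C0) (L C0) (L C0)) (L C0)) (L C0) (L C0) (N (L C0) (L C0) (L C3) (L C0) (N (L C0) (L C0) (L C3) (L C0) (L C0) (L C0) (L C0) (L C0) (L C0)) (L C0) (L C0) (L C0) (L C0)) (L C0))) (L C0) (L C0)) (L C0) (L C0) (N (L C0) (N (L C0) (L C0) (N (L C0) (L C0) (L C0) (L C0) (L C0) (N (L C0) (L C0) (L C0) (L C0) (L C0) (L C0) (N (L C0) (L C0) (L C0) (L C0) (L C0) (L C0) (L C0) (L C0) (L C3)) (L C0) (L C0)) (N (L C0) (L C0) (L C0) (L C0) (L C0) (N (L C0) (L C0) (L C0) (L C0) (L C0) (L C0) (L C0) (L C1) (L C1)) (L C0) (N (L C0) (L C0) (L C0) (L C0) (L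 C0) (L C3) (L C0) (L C0) (L C2)) (N (L C0) (L C0) (L C0) (L C0) (L C0) (L C2) (L C0) (L C2) (L C0))) (L C0) (L C0)) (L C0) (L C0) (N (L C0) (L C0) (N (L C0) (L C0) (L C0) (L C0) (L C0) (L C0) (N (L C0) (L C0) (L C0) (L C0) (L C0) (L C0) (L C0) (L C1) (L C2)) (L C0) (L C0)) (L C0) (L C0) (L C0) (N (L C0) (L C0) (N (L C0) (L C0) (L C0) (L C0) (L C0) (L C0) (L C0) (L C3) (L C3)) (L C0) (L C0) (L C0) (L C0) (N (L C0) (L C0) (L C3) (L C0) (L C0) (L C0) (L C0) (L C0) (L C0)) (N (L C0) (L C0) (L C1) (L C0) (L C0) (L C0) (L C0) (L C3) (L C0))) (L C0) (L C0)) (N (L C0) (L C0) (N (L C0) (L C0) (L C0) (L C0) (L C0) (N (L C0) (L C0) (L C0) (L C0) (L C0) (L C0) (L C0) (L C2) (L C2)) (L C0) (N (L C0) (L C0) (L C0) (L C0) (L C0) (L C0) (L C0) (L C0) (L C0)) (N (L C0) (L C0) (L C0) (L C0) (L C0) (L C0) (L C0) (L C2) (L C0))) (L C0) (L C0) (N (L C0) (L C0) (N (L C0) (L C0) (L C0) (L C0) (L C0) (L C0) (L C0) (L C2) (L C2)) (L C0) (L C0) (L C0) (L C0) (N (L C0) (L C0) (L C2) (L C0) (L C0) (L C0) (L C0) (L C0) (L C0)) (N (L C0) (L C0) (L C3) (L C0) (L C0) (L C0) (L C0) (L C2) (L C0))) (L C0) (N (L C0) (L C0) (N (L C0) (L C0)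 (L C0) (L C0) (L C0) (L C3) (L C0) (L C0) (L C3)) (L C0) (L C0) (N (L C0) (L C0) (L C3) (L C0) (L C0) (L C0) (L C0) (L C0) (L C0)) (L C0) (L C0) (N (L C0) (L C0) (L C2) (L C0) (L C0) (L C2) (L C0) (L C0) (L C0))) (N (L C0) (L C0) (N (L C0) (L C0) (L C0) (L C0) (L C0) (L C3) (L C0) (L C3) (L C0)) (L C0) (L C0) (N (L C0) (L C0) (L C2) (L C0) (L C0) (L C0) (L C0) (L C2) (L C0)) (L C0) (N (L C0) (L C0) (L C1) (L C0) (L C0) (L C2) (L C0) (L C0) (L C0)) (L C0))) (L C0) (L C0)) (L C0) (L C0) (L C0) (N (L C0) (N (L C0) (L C0) (N (L C0) (L C0) (L C0) (L C0) (L C0) (L C0) (N (L C0) (L C0) (L C0) (L C0) (L C0) (L C0) (L C0) (L C2) (L C1)) (L C0) (L C0)) (L C0) (L C0) (L C0) (N (L C0) (L C0) (N (L C0) (L C0) (L C0) (L C0) (L C0) (L C0) (L C0) (L C3) (L C3)) (L C0) (L C0) (L C0) (L C0) (N (L C0) (L C0) (L C0) (L C0) (L C0) (L C0) (L C0) (L C0) (L C0)) (N (L C0) (L C0) (L C3) (L C0) (L C0) (L C0) (L C0) (L C2) (L C0))) (L C0) (L C0)) (L C0) (L C0) (L C0) (L C0) (N (L C0) (N (L C0) (L C0) (N (L C0) (L C0) (L C0) (L C0) (L C0) (L C0) (L C0) (L C1) (L C3)) (L C0) (L C0) (L C0) (L C0) (N (L C0) (L C0) (L C1) (L C0) (L C0)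 (L C0) (L C0) (L C0) (L C2)) (N (L C0) (L C0) (L C2) (L C0) (L C0) (L C0) (L C0) (L C0) (L C0))) (L C0) (L C0) (L C0) (L C0) (L C0) (N (L C0) (N (L C0) (L C0) (L C2) (L C0) (L C0) (L C0) (L C0) (L C0) (L C0)) (L C0) (L C0) (L C0) (L C0) (L C0) (L C0) (L C1)) (N (L C0) (N (L C0) (L C0) (L C1) (L C0) (L C0) (L C0) (L C0) (L C3) (L C0)) (L C0) (L C0) (L C0) (L C0) (L C0) (L C0) (L C0))) (L C0) (L C0)) (N (L C0) (N (L C0) (L C0) (N (L C0) (L C0) (L C0) (L C0) (L C0) (N (L C0) (L C0) (L C0) (L C0) (L C0) (L C0) (L C0) (L C0) (L C0)) (L C0) (N (L C0) (L C0) (L C0) (L C0) (L C0) (L C1) (L C0) (L C0) (L C2)) (N (L C0) (L C0) (L C0) (L C0) (L C0) (L C0) (L C0) (L C0) (L C0))) (L C0) (L C0) (N (L C0) (L C0) (N (L C0) (L C0) (L C0) (L C0) (L C0) (L C0) (L C0) (L C1) (L C0)) (L C0) (L C0) (L C0) (L C0) (N (L C0) (L C0) (L C1) (L C0) (L C0) (L C0) (L C0) (L C0) (L C3)) (N (L C0) (L C0) (L C0) (L C0) (L C0) (L C0) (L C0) (L C0) (L C0))) (L C0) (N (L C0) (L C0) (N (L C0) (L C0) (L C0) (L C0) (L C0) (L C2) (L C0) (L C0) (L C3)) (L C0) (L C0) (N (L C0) (L C0) (L C2) (L C0) (L C0) (L C0) (L C0) (L C0) (L C2)) (L C0) (L C0)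 (N (L C0) (L C0) (L C2) (L C0) (L C0) (L C1) (L C0) (L C0) (L C0))) (N (L C0) (L C0) (N (L C0) (L C0) (L C0) (L C0) (L C0) (L C2) (L C0) (L C1) (L C0)) (L C0) (L C0) (N (L C0) (L C0) (L C2) (L C0) (L C0) (L C0) (L C0) (L C3) (L C0)) (L C0) (N (L C0) (L C0) (L C2) (L C0) (L C0) (L C3) (L C0) (L C0) (L C0)) (L C0))) (L C0) (L C0) (L C0) (N (L C0) (N (L C0) (L C0) (N (L C0) (L C0) (L C0) (L C0) (L C0) (L C0) (L C0) (L C2) (L C1)) (L C0) (L C0) (L C0) (L C0) (N (L C0) (L C0) (L C1) (L C0) (L C0) (L C0) (L C0) (L C0) (L C2)) (N (L C0) (L C0) (L C1) (L C0) (L C0) (L C0) (L C0) (L C0) (L C0))) (L C0) (L C0) (L C0) (L C0) (L C0) (N (L C0) (N (L C0) (L C0) (L C2) (L C0) (L C0) (L C0) (L C0) (L C0) (L C1)) (L C0) (L C0) (L C0) (L C0) (L C0) (L C0) (L C3)) (N (L C0) (N (L C0) (L C0) (L C0) (L C0) (L C0) (L C0) (L C0) (L C1) (L C0)) (L C0) (L C0) (L C0) (L C0) (L C0) (L C2) (L C0))) (L C0) (N (L C0) (N (L C0) (L C0) (N (L C0) (L C0) (L C0) (L C0) (L C0) (L C0) (L C0) (L C0) (L C2)) (L C0) (L C0) (N (L C0) (L C0) (L C1) (L C0) (L C0) (L C0) (L C0) (L C0) (L C3)) (L C0) (L C0) (N (L C0) (L C0) (L C3) (L C0) (L C0) (L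 C0) (L C0) (L C0) (L C0))) (L C0) (L C0) (L C0) (N (L C0) (N (L C0) (L C0) (L C1) (L C0) (L C0) (L C0) (L C0) (L C0) (L C2)) (L C0) (L C0) (L C0) (L C0) (L C0) (L C0) (L C1)) (L C0) (L C0) (N (L C0) (N (L C0) (L C0) (L C0) (L C0) (L C0) (L C2) (L C0) (L C0) (L C0)) (L C0) (L C0) (L C0) (L C0) (L C0) (L C0) (L C0))) (N (L C0) (N (L C0) (L C0) (N (L C0) (L C0) (L C0) (L C0) (L C0) (L C1) (L C0) (L C0) (L C0)) (L C0) (L C0) (N (L C0) (L C0) (L C0) (L C0) (L C0) (L C0) (L C0) (L C1) (L C0)) (L C0) (N (L C0) (L C0) (L C1) (L C0) (L C0) (L C0) (L C0) (L C0) (L C0)) (L C0)) (L C0) (L C0) (L C0) (N (L C0) (N (L C0) (L C0) (L C3) (L C0) (L C0) (L C0) (L C0) (L C1) (L C0)) (L C0) (L C0) (L C0) (L C0) (L C0) (L C0) (L C0)) (L C0) (N (L C0) (N (L C0) (L C0) (L C1) (L C0) (L C0) (L C0) (L C0) (L C0) (L C0)) (L C0) (L C0) (L C0) (L C2) (L C0) (L C0) (L C0)) (L C0))) (L C0) (L C0)) (L C0) (N (L C0) (N (L C0) (L C0) (N (L C0) (L C0) (L C0) (L C0) (N (L C0) (L C0) (L C0) (L C0) (L C0) (N (L C0) (L C0) (L C0) (L C0) (L C0) (L C0) (L C0) (L C0) (L C1)) (L C0) (N (L C0) (L C0) (L C0) (L C0) (L C0) (L C2) (L C0) (L C0) (L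 C1)) (N (L C0) (L C0) (L C0) (L C0) (L C0) (L C2) (L C0) (L C0) (L C0))) (L C0) (L C0) (N (L C0) (L C0) (L C0) (L C0) (N (L C0) (L C0) (L C0) (L C0) (L C0) (L C1) (L C0) (L C0) (L C2)) (L C0) (L C0) (L C0) (L C1)) (N (L C0) (L C0) (L C0) (L C0) (N (L C0) (L C0) (L C0) (L C0) (L C0) (L C1) (L C0) (L C2) (L C0)) (L C0) (L C0) (L C1) (L C0))) (L C0) (N (L C0) (L C0) (N (L C0) (L C0) (L C0) (L C0) (L C0) (N (L C0) (L C0) (L C0) (L C0) (L C0) (L C0) (L C0) (L C2) (L C1)) (L C0) (N (L C0) (L C0) (L C0) (L C0) (L C0) (L C2) (L C0) (L C0) (L C3)) (N (L C0) (L C0) (L C0) (L C0) (L C0) (L C3) (L C0) (L C1) (L C0))) (L C0) (L C0) (N (L C0) (L C0) (N (L C0) (L C0) (L C0) (L C0) (L C0) (L C0) (L C0) (L C3) (L C2)) (L C0) (L C0) (L C0) (L C0) (N (L C0) (L C0) (L C3) (L C0) (L C0) (L C0) (L C0) (L C0) (L C2)) (N (L C0) (L C0) (L C1) (L C0) (L C0) (L C0) (L C0) (L C2) (L C0))) (L C0) (N (L C0) (L C0) (N (L C0) (L C0) (L C0) (L C0) (L C0) (L C0) (L C0) (L C0) (L C0)) (L C0) (L C0) (N (L C0) (L C0) (L C1) (L C0) (L C0) (L C0) (L C0) (L C0) (L C0)) (L C0) (L C0) (N (L C0) (L C0) (L C1) (L C0) (L C0) (L C0) (L C0) (L C0) (L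 C0))) (N (L C0) (L C0) (N (L C0) (L C0) (L C0) (L C0) (L C0) (L C0) (L C0) (L C1) (L C0)) (L C0) (L C0) (N (L C0) (L C0) (L C2) (L C0) (L C0) (L C0) (L C0) (L C2) (L C0)) (L C0) (N (L C0) (L C0) (L C0) (L C0) (L C0) (L C1) (L C0) (L C0) (L C0)) (L C0))) (L C0) (L C0) (N (L C0) (L C0) (N (L C0) (L C0) (L C0) (L C0) (N (L C0) (L C0) (L C0) (L C0) (L C0) (L C1) (L C0) (L C0) (L C3)) (L C0) (L C0) (L C0) (L C3)) (L C0) (N (L C0) (L C0) (N (L C0) (L C0) (L C0) (L C0) (L C0) (L C1) (L C0) (L C0) (L C1)) (L C0) (L C0) (N (L C0) (L C0) (L C2) (L C0) (L C0) (L C0) (L C0) (L C0) (L C1)) (L C0) (L C0) (N (L C0) (L C0) (L C3) (L C0) (L C0) (L C1) (L C0) (L C0) (L C0))) (L C0) (L C0) (L C0) (N (L C0) (L C0) (L C2) (L C0) (N (L C0) (L C0) (L C3) (L C0) (L C0) (L C2) (L C0) (L C0) (L C0)) (L C0) (L C0) (L C0) (L C0))) (N (L C0) (L C0) (N (L C0) (L C0) (L C0) (L C0) (N (L C0) (L C0) (L C0) (L C0) (L C0) (L C3) (L C0) (L C3) (L C0)) (L C0) (L C0) (L C2) (L C0)) (L C0) (N (L C0) (L C0) (N (L C0) (L C0) (L C0) (L C0) (L C0) (L C3) (L C0) (L C0) (L C0)) (L C0) (L C0) (N (L C0) (L C0) (L C0) (L C0) (L C0) (L C0) (L C0) (L C3)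 (L C0)) (L C0) (N (L C0) (L C0) (L C2) (L C0) (L C0) (L C3) (L C0) (L C0) (L C0)) (L C0)) (L C0) (L C0) (N (L C0) (L C0) (L C3) (L C0) (N (L C0) (L C0) (L C3) (L C0) (L C0) (L C2) (L C0) (L C0) (L C0)) (L C0) (L C0) (L C0) (L C0)) (L C0))) (L C0) (L C0) (N (L C0) (N (L C0) (L C0) (N (L C0) (L C0) (L C0) (L C0) (L C0) (N (L C0) (L C0) (L C0) (L C0) (L C0) (L C0) (L C0) (L C1) (L C3)) (L C0) (N (L C0) (L C0) (L C0) (L C0) (L C0) (L C1) (L C0) (L C0) (L C0)) (N (L C0) (L C0) (L C0) (L C0) (L C0) (L C0) (L C0) (L C0) (L C0))) (L C0) (L C0) (N (L C0) (L C0) (N (L C0) (L C0) (L C0) (L C0) (L C0) (L C0) (L C0) (L C3) (L C3)) (L C0) (L C0) (L C0) (L C0) (N (L C0) (L C0) (L C2) (L C0) (L C0) (L C0) (L C0) (L C0) (L C1)) (N (L C0) (L C0) (L C2) (L C0) (L C0) (L C0) (L C0) (L C3) (L C0))) (L C0) (N (L C0) (L C0) (N (L C0) (L C0) (L C0) (L C0) (L C0) (L C3) (L C0) (L C0) (L C3)) (L C0) (L C0) (N (L C0) (L C0) (L C2) (L C0) (L C0) (L C0) (L C0) (L C0) (L C2)) (L C0) (L C0) (N (L C0) (L C0) (L C3) (L C0) (L C0) (L C3) (L C0) (L C0) (L C0))) (N (L C0) (L C0) (N (L C0) (L C0) (L C0) (L C0) (L C0) (L C2) (L C0) (L C0) (L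 C0)) (L C0) (L C0) (N (L C0) (L C0) (L C1) (L C0) (L C0) (L C0) (L C0) (L C3) (L C0)) (L C0) (N (L C0) (L C0) (L C1) (L C0) (L C0) (L C2) (L C0) (L C0) (L C0)) (L C0))) (L C0) (L C0) (L C0) (N (L C0) (N (L C0) (L C0) (N (L C0) (L C0) (L C0) (L C0) (L C0) (L C0) (L C0) (L C3) (L C1)) (L C0) (L C0) (L C0) (L C0) (N (L C0) (L C0) (L C0) (L C0) (L C0) (L C0) (L C0) (L C0) (L C3)) (N (L C0) (L C0) (L C3) (L C0) (L C0) (L C0) (L C0) (L C1) (L C0))) (L C0) (L C0) (L C0) (L C0) (L C0) (N (L C0) (N (L C0) (L C0) (L C3) (L C0) (L C0) (L C0) (L C0) (L C0) (L C3)) (L C0) (L C0) (L C0) (L C0) (L C0) (L C0) (L C3)) (N (L C0) (N (L C0) (L C0) (L C0) (L C0) (L C0) (L C0) (L C0) (L C2) (L C0)) (L C0) (L C0) (L C0) (L C0) (L C0) (L C3) (L C0))) (L C0) (N (L C0) (N (L C0) (L C0) (N (L C0) (L C0) (L C0) (L C0) (L C0) (L C0) (L C0) (L C0) (L C3)) (L C0) (L C0) (N (L C0) (L C0) (L C3) (L C0) (L C0) (L C0) (L C0) (L C0) (L C3)) (L C0) (L C0) (N (L C0) (L C0) (L C0) (L C0) (L C0) (L C2) (L C0) (L C0) (L C0))) (L C0) (L C0) (L C0) (N (L C0) (N (L C0) (L C0) (L C0) (L C0) (L C0) (L C0) (L C0) (L C0) (L C0)) (L C0) (L C0) (L C0)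 (L C0) (L C0) (L C0) (L C0)) (L C0) (L C0) (N (L C0) (N (L C0) (L C0) (L C3) (L C0) (L C0) (L C0) (L C0) (L C0) (L C0)) (L C0) (L C0) (L C0) (L C0) (L C0) (L C0) (L C0))) (N (L C0) (N (L C0) (L C0) (N (L C0) (L C0) (L C0) (L C0) (L C0) (L C3) (L C0) (L C0) (L C0)) (L C0) (L C0) (N (L C0) (L C0) (L C2) (L C0) (L C0) (L C0) (L C0) (L C2) (L C0)) (L C0) (N (L C0) (L C0) (L C0) (L C0) (L C0) (L C3) (L C0) (L C0) (L C0)) (L C0)) (L C0) (L C0) (L C0) (N (L C0) (N (L C0) (L C0) (L C0) (L C0) (L C0) (L C0) (L C0) (L C2) (L C0)) (L C0) (L C0) (L C0) (L C0) (L C0) (L C2) (L C0)) (L C0) (N (L C0) (N (L C0) (L C0) (L C3) (L C0) (L C0) (L C1) (L C0) (L C0) (L C0)) (L C0) (L C0) (L C0) (L C2) (L C0) (L C0) (L C0)) (L C0))) (L C0) (L C0) (N (L C0) (N (L C0) (L C0) (N (L C0) (L C0) (L C0) (L C0) (N (L C0) (L C0) (L C0) (L C0) (L C0) (L C0) (L C0) (L C0) (L C0)) (L C0) (L C0) (L C0) (L C3)) (L C0) (N (L C0) (L C0) (N (L C0) (L C0) (L C0) (L C0) (L C0) (L C1) (L C0) (L C0) (L C0)) (L C0) (L C0) (N (L C0) (L C0) (L C0) (L C0) (L C0) (L C0) (L C0) (L C0) (L C0)) (L C0) (L C0) (N (L C0) (L C0) (L C0) (L C0) (L C0) (L C2)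 (L C0) (L C0) (L C0))) (L C0) (L C0) (L C0) (N (L C0) (L C0) (L C2) (L C0) (N (L C0) (L C0) (L C2) (L C0) (L C0) (L C2) (L C0) (L C0) (L C0)) (L C0) (L C0) (L C0) (L C0))) (L C0) (L C0) (N (L C0) (N (L C0) (L C0) (N (L C0) (L C0) (L C0) (L C0) (L C0) (L C1) (L C0) (L C0) (L C1)) (L C0) (L C0) (N (L C0) (L C0) (L C1) (L C0) (L C0) (L C0) (L C0) (L C0) (L C1)) (L C0) (L C0) (N (L C0) (L C0) (L C2) (L C0) (L C0) (L C1) (L C0) (L C0) (L C0))) (L C0) (L C0) (L C0) (N (L C0) (N (L C0) (L C0) (L C3) (L C0) (L C0) (L C0) (L C0) (L C0) (L C3)) (L C0) (L C0) (L C0) (L C0) (L C0) (L C0) (L C0)) (L C0) (L C0) (N (L C0) (N (L C0) (L C0) (L C0) (L C0) (L C0) (L C3) (L C0) (L C0) (L C0)) (L C0) (L C0) (L C0) (L C0) (L C0) (L C0) (L C0))) (L C0) (L C0) (L C0) (N (L C0) (N (L C0) (L C0) (L C0) (L C0) (N (L C0) (L C0) (L C1) (L C0) (L C0) (L C0) (L C0) (L C0) (L C0)) (L C0) (L C0) (L C0) (L C0)) (L C0) (L C0) (N (L C0) (N (L C0) (L C0) (L C2) (L C0) (L C0) (L C3) (L C0) (L C0) (L C0)) (L C0) (L C0) (L C0) (L C3) (L C0) (L C0) (L C0)) (L C0) (L C0) (L C0) (L C0))) (N (L C0) (N (L C0) (L C0) (N (L C0) (L C0) (L C0) (L C0) (N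 (L C0) (L C0) (L C0) (L C0) (L C0) (L C2) (L C0) (L C2) (L C0)) (L C0) (L C0) (L C1) (L C0)) (L C0) (N (L C0) (L C0) (N (L C0) (L C0) (L C0) (L C0) (L C0) (L C0) (L C0) (L C1) (L C0)) (L C0) (L C0) (N (L C0) (L C0) (L C2) (L C0) (L C0) (L C0) (L C0) (L C0) (L C0)) (L C0) (N (L C0) (L C0) (L C3) (L C0) (L C0) (L C2) (L C0) (L C0) (L C0)) (L C0)) (L C0) (L C0) (N (L C0) (L C0) (L C2) (L C0) (N (L C0) (L C0) (L C1) (L C0) (L C0) (L C1) (L C0) (L C0) (L C0)) (L C0) (L C0) (L C0) (L C0)) (L C0)) (L C0) (L C0) (N (L C0) (N (L C0) (L C0) (N (L C0) (L C0) (L C0) (L C0) (L C0) (L C3) (L C0) (L C1) (L C0)) (L C0) (L C0) (N (L C0) (L C0) (L C3) (L C0) (L C0) (L C0) (L C0) (L C1) (L C0)) (L C0) (N (L C0) (L C0) (L C3) (L C0) (L C0) (L C1) (L C0) (L C0) (L C0)) (L C0)) (L C0) (L C0) (L C0) (N (L C0) (N (L C0) (L C0) (L C3) (L C0) (L C0) (L C0) (L C0) (L C0) (L C0)) (L C0) (L C0) (L C0) (L C0) (L C0) (L C1) (L C0)) (L C0) (N (L C0) (N (L C0) (L C0) (L C3) (L C0) (L C0) (L C0) (L C0) (L C0) (L C0)) (L C0) (L C0) (L C0) (L C2) (L C0) (L C0) (L C0)) (L C0)) (L C0) (L C0) (N (L C0) (N (L C0) (L C0) (L C3) (L C0) (N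 (L C0) (L C0) (L C2) (L C0) (L C0) (L C2) (L C0) (L C0) (L C0)) (L C0) (L C0) (L C0) (L C0)) (L C0) (L C0) (N (L C0) (N (L C0) (L C0) (L C3) (L C0) (L C0) (L C3) (L C0) (L C0) (L C0)) (L C0) (L C0) (L C0) (L C0) (L C0) (L C0) (L C0)) (L C0) (L C0) (L C0) (L C0)) (L C0))) (L C0) (L C0)) (L C0) (L C0) (L C0) (L C0) (L C0)) (L C0) (L C0) (L C0) (L C0) (L C0) (L C0) (L C0) (L C0)) r" unfolding Tab_def tr_def ..

fun p2 :: "d list \<Rightarrow> d list" where "p2 (a0#a1#r) = (a1#a0#r)" | "p2 xs = xs"
fun p3 :: "d list \<Rightarrow> d list" where "p3 (a0#a1#a2#r) = (a2#a1#a0#r)" | "p3 xs = xs"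
fun p4 :: "d list \<Rightarrow> d list" where "p4 (a0#a1#a2#a3#r) = (a3#a2#a1#a0#r)" | "p4 xs = xs"
fun p5 :: "d list \<Rightarrow> d list" where "p5 (a0#a1#a2#a3#a4#r) = (a4#a3#a2#a1#a0#r)" | "p5 xs = xs"
fun p6 :: "d list \<Rightarrow> d list" where "p6 (a0#a1#a2#a3#a4#a5#r) = (a5#a4#a3#a2#a1#a0#r)" | "p6 xs = xs"
fun p7 :: "d list \<Rightarrow> d list" where "p7 (a0#a1#a2#a3#a4#a5#a6#r) = (a6#a5#a4#a3#a2#a1#a0#r)" | "p7 xs = xs"
fun p8 :: "d list \<Rightarrow> d list" where "p8 (a0#a1#a2#a3#a4#a5#a6#a7#r) = (a7#a6#a5#a4#a3#a2#a1#a0#r)" | "p8 xs = xs"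
fun p9 :: "d list \<Rightarrow> d list" where "p9 (a0#a1#a2#a3#a4#a5#a6#a7#a8#r) = (a8#a7#a6#a5#a4#a3#a2#a1#a0#r)" | "p9 xs = xs"

definition chk2 :: "d list \<Rightarrow> d list \<Rightarrow> bool" where
  "chk2 r z = (case alg (z, Tab r) of (z', c) \<Rightarrow> c \<noteq> Tab z')"
definition chkB :: "d list \<Rightarrow> bool" where
  "chkB r = (chk2 r (p2 r) \<and> chk2 r (p3 r) \<and> chk2 r (p4 r) \<and> chk2 r (p5 r) \<and> chk2 r (p6 r) \<and> chk2 r (p7 r) \<and> chk2 r (p8 r) \<and> chk2 r (p9 r))"

fun preds :: "d \<Rightarrow> d list" where
  "preds D3 = [D2]" | "preds D5 = [D4]" | "preds D6 = [D5]" | "preds D7 = [D4]"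
| "preds D8 = [D7]" | "preds D9 = [D7]" | "preds D1 = []" | "preds D2 = []" | "preds D4 = []"

definition can_add :: "d list \<Rightarrow> d \<Rightarrow> bool" where
  "can_add q a \<longleftrightarrow> a \<notin> set q \<and> (q = [] \<longrightarrow> a = D1) \<and> list_all (\<lambda>b. b \<in> set q) (preds a)"

fun ac :: "nat \<Rightarrow> d list \<Rightarrow> d list \<Rightarrow> bool" where
  "ac 0 q as = chkB (rev q)"
| "ac (Suc n) q [] = True"
| "ac (Suc n) q (a # as) = ((if can_add q a then ac n (a # q) [D1,D2,D3,D4,D5,D6,D7,D8,D9] else True) \<and> ac (Suc n) q as)"

lemma ac_big: "ac (Suc (Suc (Suc (Suc (Suc (Suc n)))))) q (a # as) = ((if can_add q a then ac (Suc (Suc (Suc (Suc (Suc n))))) (a # q) [D1,D2,D3,D4,D5,D6,D7,D8,D9] else True) \<and> ac (Suc (Suc (Suc (Suc (Suc (Suc n)))))) q as)"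
  by (rule ac.simps(3))

lemma leaf0: "ac (Suc (Suc (Suc (Suc (Suc 0))))) [D4,D3,D2,D1] [D1,D2,D3,D4,D5,D6,D7,D8,D9]"
  by (simp only: ac.simps list.pred_inject can_add_def list.set insert_iff empty_iff preds.simps list.distinct rev.simps append.simps chkB_def chk2_def p2.simps p3.simps p4.simps p5.simps p6.simps p7.simps p8.simps p9.simps alg_def stp_def fst_conv snd_conv g1_def g2_def g3_def g4_def g5_def k1_def k2_def k3_def k4_def k5_def EA_def CEA_def EC_def CEC_def ED_def CED_def d.case before.simps firstP.simps isB12.simps isB2.simps list.map list.sel if_True if_False d.distinct col.distinct simp_thms prod.case Tab_eq lk.simps id_apply ea1.simps ea2.simps ea3.simps ea4.simps ea5.simps ea6.simps ea7.simps ea8.simps ea9.simps cea1.simps cea2.simps cea3.simps cea4.simps cea5.simps cea6.simps cea7.simps cea8.simps cea9.simps eb.simps ceb.simps ee.simps cee.simps ec4.simps ec5.simps ec6.simps ec7.simps ec8.simps ec9.simps cec4.simps cec5.simps cec6.simps cec7.simps cec8.simps cec9.simps ed7.simps ed8.simps ed9.simps ced7.simps ced8.simps ced9.simps cong: lk_cong if_weak_cong)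

lemma leaf1: "ac (Suc (Suc (Suc (Suc (Suc 0))))) [D3,D4,D2,D1] [D1,D2,D3,D4,D5,D6,D7,D8,D9]"
  by (simp only: ac.simps list.pred_inject can_add_def list.set insert_iff empty_iff preds.simps list.distinct rev.simps append.simps chkB_def chk2_def p2.simps p3.simps p4.simps p5.simps p6.simps p7.simps p8.simps p9.simps alg_def stp_def fst_conv snd_conv g1_def g2_def g3_def g4_def g5_def k1_def k2_def k3_def k4_def k5_def EA_def CEA_def EC_def CEC_def ED_def CED_def d.case before.simps firstP.simps isB12.simps isB2.simps list.map list.sel if_True if_False d.distinct col.distinct simp_thms prod.case Tab_eq lk.simps id_apply ea1.simps ea2.simps ea3.simps ea4.simps ea5.simps ea6.simps ea7.simps ea8.simps ea9.simps cea1.simps cea2.simps cea3.simps cea4.simps cea5.simps cea6.simps cea7.simps cea8.simps cea9.simps eb.simps ceb.simps ee.simps cee.simps ec4.simps ec5.simps ec6.simps ec7.simps ec8.simps ec9.simps cec4.simps cec5.simps cec6.simps cec7.simps cec8.simps cec9.simps ed7.simps ed8.simps ed9.simps ced7.simps ced8.simps ced9.simps cong: lk_cong if_weak_cong)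

lemma leaf2: "ac (Suc (Suc (Suc (Suc (Suc 0))))) [D5,D4,D2,D1] [D1,D2,D3,D4,D5,D6,D7,D8,D9]"
  by (simp only: ac.simps list.pred_inject can_add_def list.set insert_iff empty_iff preds.simps list.distinct rev.simps append.simps chkB_def chk2_def p2.simps p3.simps p4.simps p5.simps p6.simps p7.simps p8.simps p9.simps alg_def stp_def fst_conv snd_conv g1_def g2_def g3_def g4_def g5_def k1_def k2_def k3_def k4_def k5_def EA_def CEA_def EC_def CEC_def ED_def CED_def d.case before.simps firstP.simps isB12.simps isB2.simps list.map list.sel if_True if_False d.distinct col.distinct simp_thms prod.case Tab_eq lk.simps id_apply ea1.simps ea2.simps ea3.simps ea4.simps ea5.simps ea6.simps ea7.simps ea8.simps ea9.simps cea1.simps cea2.simps cea3.simps cea4.simps cea5.simps cea6.simps cea7.simps cea8.simps cea9.simps eb.simps ceb.simps ee.simps cee.simps ec4.simps ec5.simps ec6.simps ec7.simps ec8.simps ec9.simps cec4.simps cec5.simps cec6.simps cec7.simps cec8.simps cec9.simps ed7.simps ed8.simps ed9.simps ced7.simps ced8.simps ced9.simps cong: lk_cong if_weak_cong)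

lemma leaf3: "ac (Suc (Suc (Suc (Suc (Suc 0))))) [D7,D4,D2,D1] [D1,D2,D3,D4,D5,D6,D7,D8,D9]"
  by (simp only: ac.simps list.pred_inject can_add_def list.set insert_iff empty_iff preds.simps list.distinct rev.simps append.simps chkB_def chk2_def p2.simps p3.simps p4.simps p5.simps p6.simps p7.simps p8.simps p9.simps alg_def stp_def fst_conv snd_conv g1_def g2_def g3_def g4_def g5_def k1_def k2_def k3_def k4_def k5_def EA_def CEA_def EC_def CEC_def ED_def CED_def d.case before.simps firstP.simps isB12.simps isB2.simps list.map list.sel if_True if_False d.distinct col.distinct simp_thms prod.case Tab_eq lk.simps id_apply ea1.simps ea2.simps ea3.simps ea4.simps ea5.simps ea6.simps ea7.simps ea8.simps ea9.simps cea1.simps cea2.simps cea3.simps cea4.simps cea5.simps cea6.simps cea7.simps cea8.simps cea9.simps eb.simps ceb.simps ee.simps cee.simps ec4.simps ec5.simps ec6.simps ec7.simps ec8.simps ec9.simps cec4.simps cec5.simps cec6.simps cec7.simps cec8.simps cec9.simps ed7.simps ed8.simps ed9.simps ced7.simps ced8.simps ced9.simps cong: lk_cong if_weak_cong)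

lemma leaf4: "ac (Suc (Suc (Suc (Suc (Suc 0))))) [D3,D2,D4,D1] [D1,D2,D3,D4,D5,D6,D7,D8,D9]"
  by (simp only: ac.simps list.pred_inject can_add_def list.set insert_iff empty_iff preds.simps list.distinct rev.simps append.simps chkB_def chk2_def p2.simps p3.simps p4.simps p5.simps p6.simps p7.simps p8.simps p9.simps alg_def stp_def fst_conv snd_conv g1_def g2_def g3_def g4_def g5_def k1_def k2_def k3_def k4_def k5_def EA_def CEA_def EC_def CEC_def ED_def CED_def d.case before.simps firstP.simps isB12.simps isB2.simps list.map list.sel if_True if_False d.distinct col.distinct simp_thms prod.case Tab_eq lk.simps id_apply ea1.simps ea2.simps ea3.simps ea4.simps ea5.simps ea6.simps ea7.simps ea8.simps ea9.simps cea1.simps cea2.simps cea3.simps cea4.simps cea5.simps cea6.simps cea7.simps cea8.simps cea9.simps eb.simps ceb.simps ee.simps cee.simps ec4.simps ec5.simps ec6.simps ec7.simps ec8.simps ec9.simps cec4.simps cec5.simps cec6.simps cec7.simps cec8.simps cec9.simps ed7.simps ed8.simps ed9.simps ced7.simps ced8.simps ced9.simps cong: lk_cong if_weak_cong)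

lemma leaf5: "ac (Suc (Suc (Suc (Suc (Suc 0))))) [D5,D2,D4,D1] [D1,D2,D3,D4,D5,D6,D7,D8,D9]"
  by (simp only: ac.simps list.pred_inject can_add_def list.set insert_iff empty_iff preds.simps list.distinct rev.simps append.simps chkB_def chk2_def p2.simps p3.simps p4.simps p5.simps p6.simps p7.simps p8.simps p9.simps alg_def stp_def fst_conv snd_conv g1_def g2_def g3_def g4_def g5_def k1_def k2_def k3_def k4_def k5_def EA_def CEA_def EC_def CEC_def ED_def CED_def d.case before.simps firstP.simps isB12.simps isB2.simps list.map list.sel if_True if_False d.distinct col.distinct simp_thms prod.case Tab_eq lk.simps id_apply ea1.simps ea2.simps ea3.simps ea4.simps ea5.simps ea6.simps ea7.simps ea8.simps ea9.simps cea1.simps cea2.simps cea3.simps cea4.simps cea5.simps cea6.simps cea7.simps cea8.simps cea9.simps eb.simps ceb.simps ee.simps cee.simps ec4.simps ec5.simps ec6.simps ec7.simps ec8.simps ec9.simps cec4.simps cec5.simps cec6.simps cec7.simps cec8.simps cec9.simps ed7.simps ed8.simps ed9.simps ced7.simps ced8.simps ced9.simps cong: lk_cong if_weak_cong)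

lemma leaf6: "ac (Suc (Suc (Suc (Suc (Suc 0))))) [D7,D2,D4,D1] [D1,D2,D3,D4,D5,D6,D7,D8,D9]"
  by (simp only: ac.simps list.pred_inject can_add_def list.set insert_iff empty_iff preds.simps list.distinct rev.simps append.simps chkB_def chk2_def p2.simps p3.simps p4.simps p5.simps p6.simps p7.simps p8.simps p9.simps alg_def stp_def fst_conv snd_conv g1_def g2_def g3_def g4_def g5_def k1_def k2_def k3_def k4_def k5_def EA_def CEA_def EC_def CEC_def ED_def CED_def d.case before.simps firstP.simps isB12.simps isB2.simps list.map list.sel if_True if_False d.distinct col.distinct simp_thms prod.case Tab_eq lk.simps id_apply ea1.simps ea2.simps ea3.simps ea4.simps ea5.simps ea6.simps ea7.simps ea8.simps ea9.simps cea1.simps cea2.simps cea3.simps cea4.simps cea5.simps cea6.simps cea7.simps cea8.simps cea9.simps eb.simps ceb.simps ee.simps cee.simps ec4.simps ec5.simps ec6.simps ec7.simps ec8.simps ec9.simps cec4.simps cec5.simps cec6.simps cec7.simps cec8.simps cec9.simps ed7.simps ed8.simps ed9.simps ced7.simps ced8.simps ced9.simps cong: lk_cong if_weak_cong)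

lemma leaf7: "ac (Suc (Suc (Suc (Suc (Suc 0))))) [D2,D5,D4,D1] [D1,D2,D3,D4,D5,D6,D7,D8,D9]"
  by (simp only: ac.simps list.pred_inject can_add_def list.set insert_iff empty_iff preds.simps list.distinct rev.simps append.simps chkB_def chk2_def p2.simps p3.simps p4.simps p5.simps p6.simps p7.simps p8.simps p9.simps alg_def stp_def fst_conv snd_conv g1_def g2_def g3_def g4_def g5_def k1_def k2_def k3_def k4_def k5_def EA_def CEA_def EC_def CEC_def ED_def CED_def d.case before.simps firstP.simps isB12.simps isB2.simps list.map list.sel if_True if_False d.distinct col.distinct simp_thms prod.case Tab_eq lk.simps id_apply ea1.simps ea2.simps ea3.simps ea4.simps ea5.simps ea6.simps ea7.simps ea8.simps ea9.simps cea1.simps cea2.simps cea3.simps cea4.simps cea5.simps cea6.simps cea7.simps cea8.simps cea9.simps eb.simps ceb.simps ee.simps cee.simps ec4.simps ec5.simps ec6.simps ec7.simps ec8.simps ec9.simps cec4.simps cec5.simps cec6.simps cec7.simps cec8.simps cec9.simps ed7.simps ed8.simps ed9.simps ced7.simps ced8.simps ced9.simps cong: lk_cong if_weak_cong)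

lemma leaf8: "ac (Suc (Suc (Suc (Suc (Suc 0))))) [D6,D5,D4,D1] [D1,D2,D3,D4,D5,D6,D7,D8,D9]"
  by (simp only: ac.simps list.pred_inject can_add_def list.set insert_iff empty_iff preds.simps list.distinct rev.simps append.simps chkB_def chk2_def p2.simps p3.simps p4.simps p5.simps p6.simps p7.simps p8.simps p9.simps alg_def stp_def fst_conv snd_conv g1_def g2_def g3_def g4_def g5_def k1_def k2_def k3_def k4_def k5_def EA_def CEA_def EC_def CEC_def ED_def CED_def d.case before.simps firstP.simps isB12.simps isB2.simps list.map list.sel if_True if_False d.distinct col.distinct simp_thms prod.case Tab_eq lk.simps id_apply ea1.simps ea2.simps ea3.simps ea4.simps ea5.simps ea6.simps ea7.simps ea8.simps ea9.simps cea1.simps cea2.simps cea3.simps cea4.simps cea5.simps cea6.simps cea7.simps cea8.simps cea9.simps eb.simps ceb.simps ee.simps cee.simps ec4.simps ec5.simps ec6.simps ec7.simps ec8.simps ec9.simps cec4.simps cec5.simps cec6.simps cec7.simps cec8.simps cec9.simps ed7.simps ed8.simps ed9.simps ced7.simps ced8.simps ced9.simps cong: lk_cong if_weak_cong)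

lemma leaf9: "ac (Suc (Suc (Suc (Suc (Suc 0))))) [D7,D5,D4,D1] [D1,D2,D3,D4,D5,D6,D7,D8,D9]"
  by (simp only: ac.simps list.pred_inject can_add_def list.set insert_iff empty_iff preds.simps list.distinct rev.simps append.simps chkB_def chk2_def p2.simps p3.simps p4.simps p5.simps p6.simps p7.simps p8.simps p9.simps alg_def stp_def fst_conv snd_conv g1_def g2_def g3_def g4_def g5_def k1_def k2_def k3_def k4_def k5_def EA_def CEA_def EC_def CEC_def ED_def CED_def d.case before.simps firstP.simps isB12.simps isB2.simps list.map list.sel if_True if_False d.distinct col.distinct simp_thms prod.case Tab_eq lk.simps id_apply ea1.simps ea2.simps ea3.simps ea4.simps ea5.simps ea6.simps ea7.simps ea8.simps ea9.simps cea1.simps cea2.simps cea3.simps cea4.simps cea5.simps cea6.simps cea7.simps cea8.simps cea9.simps eb.simps ceb.simps ee.simps cee.simps ec4.simps ec5.simps ec6.simps ec7.simps ec8.simps ec9.simps cec4.simps cec5.simps cec6.simps cec7.simps cec8.simps cec9.simps ed7.simps ed8.simps ed9.simps ced7.simps ced8.simps ced9.simps cong: lk_cong if_weak_cong)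

lemma leaf10: "ac (Suc (Suc (Suc (Suc (Suc 0))))) [D2,D7,D4,D1] [D1,D2,D3,D4,D5,D6,D7,D8,D9]"
  by (simp only: ac.simps list.pred_inject can_add_def list.set insert_iff empty_iff preds.simps list.distinct rev.simps append.simps chkB_def chk2_def p2.simps p3.simps p4.simps p5.simps p6.simps p7.simps p8.simps p9.simps alg_def stp_def fst_conv snd_conv g1_def g2_def g3_def g4_def g5_def k1_def k2_def k3_def k4_def k5_def EA_def CEA_def EC_def CEC_def ED_def CED_def d.case before.simps firstP.simps isB12.simps isB2.simps list.map list.sel if_True if_False d.distinct col.distinct simp_thms prod.case Tab_eq lk.simps id_apply ea1.simps ea2.simps ea3.simps ea4.simps ea5.simps ea6.simps ea7.simps ea8.simps ea9.simps cea1.simps cea2.simps cea3.simps cea4.simps cea5.simps cea6.simps cea7.simps cea8.simps cea9.simps eb.simps ceb.simps ee.simps cee.simps ec4.simps ec5.simps ec6.simps ec7.simps ec8.simps ec9.simps cec4.simps cec5.simps cec6.simps cec7.simps cec8.simps cec9.simps ed7.simps ed8.simps ed9.simps ced7.simps ced8.simps ced9.simps cong: lk_cong if_weak_cong)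

lemma leaf11: "ac (Suc (Suc (Suc (Suc (Suc 0))))) [D5,D7,D4,D1] [D1,D2,D3,D4,D5,D6,D7,D8,D9]"
  by (simp only: ac.simps list.pred_inject can_add_def list.set insert_iff empty_iff preds.simps list.distinct rev.simps append.simps chkB_def chk2_def p2.simps p3.simps p4.simps p5.simps p6.simps p7.simps p8.simps p9.simps alg_def stp_def fst_conv snd_conv g1_def g2_def g3_def g4_def g5_def k1_def k2_def k3_def k4_def k5_def EA_def CEA_def EC_def CEC_def ED_def CED_def d.case before.simps firstP.simps isB12.simps isB2.simps list.map list.sel if_True if_False d.distinct col.distinct simp_thms prod.case Tab_eq lk.simps id_apply ea1.simps ea2.simps ea3.simps ea4.simps ea5.simps ea6.simps ea7.simps ea8.simps ea9.simps cea1.simps cea2.simps cea3.simps cea4.simps cea5.simps cea6.simps cea7.simps cea8.simps cea9.simps eb.simps ceb.simps ee.simps cee.simps ec4.simps ec5.simps ec6.simps ec7.simps ec8.simps ec9.simps cec4.simps cec5.simps cec6.simps cec7.simps cec8.simps cec9.simps ed7.simps ed8.simps ed9.simps ced7.simps ced8.simps ced9.simps cong: lk_cong if_weak_cong)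

lemma leaf12: "ac (Suc (Suc (Suc (Suc (Suc 0))))) [D8,D7,D4,D1] [D1,D2,D3,D4,D5,D6,D7,D8,D9]"
  by (simp only: ac.simps list.pred_inject can_add_def list.set insert_iff empty_iff preds.simps list.distinct rev.simps append.simps chkB_def chk2_def p2.simps p3.simps p4.simps p5.simps p6.simps p7.simps p8.simps p9.simps alg_def stp_def fst_conv snd_conv g1_def g2_def g3_def g4_def g5_def k1_def k2_def k3_def k4_def k5_def EA_def CEA_def EC_def CEC_def ED_def CED_def d.case before.simps firstP.simps isB12.simps isB2.simps list.map list.sel if_True if_False d.distinct col.distinct simp_thms prod.case Tab_eq lk.simps id_apply ea1.simps ea2.simps ea3.simps ea4.simps ea5.simps ea6.simps ea7.simps ea8.simps ea9.simps cea1.simps cea2.simps cea3.simps cea4.simps cea5.simps cea6.simps cea7.simps cea8.simps cea9.simps eb.simps ceb.simps ee.simps cee.simps ec4.simps ec5.simps ec6.simps ec7.simps ec8.simps ec9.simps cec4.simps cec5.simps cec6.simps cec7.simps cec8.simps cec9.simps ed7.simps ed8.simps ed9.simps ced7.simps ced8.simps ced9.simps cong: lk_cong if_weak_cong)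

lemma leaf13: "ac (Suc (Suc (Suc (Suc (Suc 0))))) [D9,D7,D4,D1] [D1,D2,D3,D4,D5,D6,D7,D8,D9]"
  by (simp only: ac.simps list.pred_inject can_add_def list.set insert_iff empty_iff preds.simps list.distinct rev.simps append.simps chkB_def chk2_def p2.simps p3.simps p4.simps p5.simps p6.simps p7.simps p8.simps p9.simps alg_def stp_def fst_conv snd_conv g1_def g2_def g3_def g4_def g5_def k1_def k2_def k3_def k4_def k5_def EA_def CEA_def EC_def CEC_def ED_def CED_def d.case before.simps firstP.simps isB12.simps isB2.simps list.map list.sel if_True if_False d.distinct col.distinct simp_thms prod.case Tab_eq lk.simps id_apply ea1.simps ea2.simps ea3.simps ea4.simps ea5.simps ea6.simps ea7.simps ea8.simps ea9.simps cea1.simps cea2.simps cea3.simps cea4.simps cea5.simps cea6.simps cea7.simps cea8.simps cea9.simps eb.simps ceb.simps ee.simps cee.simps ec4.simps ec5.simps ec6.simps ec7.simps ec8.simps ec9.simps cec4.simps cec5.simps cec6.simps cec7.simps cec8.simps cec9.simps ed7.simps ed8.simps ed9.simps ced7.simps ced8.simps ced9.simps cong: lk_cong if_weak_cong)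

lemma allchk_top: "ac (Suc (Suc (Suc (Suc (Suc (Suc (Suc (Suc (Suc 0))))))))) [] [D1,D2,D3,D4,D5,D6,D7,D8,D9]"
  by (simp only: ac_big ac.simps(2) list.pred_inject can_add_def list.set insert_iff empty_iff preds.simps list.distinct rev.simps append.simps chkB_def chk2_def p2.simps p3.simps p4.simps p5.simps p6.simps p7.simps p8.simps p9.simps alg_def stp_def fst_conv snd_conv g1_def g2_def g3_def g4_def g5_def k1_def k2_def k3_def k4_def k5_def EA_def CEA_def EC_def CEC_def ED_def CED_def d.case before.simps firstP.simps isB12.simps isB2.simps list.map list.sel if_True if_False d.distinct col.distinct simp_thms prod.case Tab_eq lk.simps id_apply ea1.simps ea2.simps ea3.simps ea4.simps ea5.simps ea6.simps ea7.simps ea8.simps ea9.simps cea1.simps cea2.simps cea3.simps cea4.simps cea5.simps cea6.simps cea7.simps cea8.simps cea9.simps eb.simps ceb.simps ee.simps cee.simps ec4.simps ec5.simps ec6.simps ec7.simps ec8.simps ec9.simps cec4.simps cec5.simps cec6.simps cec7.simps cec8.simps cec9.simps ed7.simps ed8.simps ed9.simps ced7.simps ced8.simps ced9.simps leaf0 leaf1 leaf2 leaf3 leaf4 leaf5 leaf6 leaf7 leaf8 leaf9 leaf10 leaf11 leaf12 leaf13 cong: lk_cong if_weak_cong)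

lemma all_d: "a \<in> set [D1,D2,D3,D4,D5,D6,D7,D8,D9]" by (cases a) auto

lemma ac_mem: "ac (Suc n) q as \<Longrightarrow> a \<in> set as \<Longrightarrow> can_add q a \<Longrightarrow> ac n (a # q) [D1,D2,D3,D4,D5,D6,D7,D8,D9]"
  by (induction as) (auto split: if_splits)

lemma ac_sound:
  "ac n q [D1,D2,D3,D4,D5,D6,D7,D8,D9] \<Longrightarrow> length y = n \<Longrightarrow> (\<forall>k<n. can_add (rev (take k y) @ q) (y ! k))
   \<Longrightarrow> chkB (rev q @ y)"
proof (induction n arbitrary: q y)
  case 0
  then show ?case by simp
next
  case (Suc n)
  then obtain a y' where y: "y = a # y'" by (cases y) auto
  have ca: "can_add q a" using Suc.prems(3) y by (auto dest: spec[of _ 0])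
  have "ac n (a # q) [D1,D2,D3,D4,D5,D6,D7,D8,D9]" using ac_mem[OF Suc.prems(1) all_d ca] .
  moreover have "length y' = n" using Suc.prems(2) y by simp
  moreover have "\<forall>k<n. can_add (rev (take k y') @ (a # q)) (y' ! k)"
  proof (intro allI impI)
    fix k assume "k < n"
    then have "can_add (rev (take (Suc k) y) @ q) (y ! Suc k)" using Suc.prems(3) by blast
    then show "can_add (rev (take k y') @ (a # q)) (y' ! k)" using y by simp
  qed
  ultimately have "chkB (rev (a # q) @ y')" using Suc.IH by blast
  then show ?case using y by simp
qed

lemma nth_notin_take: "distinct x \<Longrightarrow> k < length x \<Longrightarrow> x ! k \<notin> set (take k x)"
  by (auto simp: in_set_conv_nth nth_eq_iff_index_eq)

lemma before_take: "distinct x \<Longrightarrow> before x a b \<Longrightarrow> a \<noteq> b \<Longrightarrow> k < length x \<Longrightarrow> x ! k = b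
   \<Longrightarrow> a \<in> set (take k x)"
proof (induction x arbitrary: k)
  case Nil then show ?case by simp
next
  case (Cons z x)
  show ?case
  proof (cases k)
    case 0 then show ?thesis using Cons.prems by (auto split: if_splits)
  next
    case (Suc k')
    show ?thesis
    proof (cases "z = a")
      case True then show ?thesis using Suc by simp
    next
      case False
      then have "before x a b" "z \<noteq> b" using Cons.prems Suc by (auto split: if_splits)
      then have "a \<in> set (take k' x)" using Cons Suc by auto
      then show ?thesis using Suc by simp
    qed
  qed
qed

lemma preds_before: "b \<in> set (preds a) \<Longrightarrow> canon x \<Longrightarrow> before x b a \<and> b \<noteq> a"
  by (cases a) (auto simp: canon_def)

lemma card_d: "card (UNIV :: d set) = 9" by (simp add: UNIV_d)

lemma canon_len: "canon x \<Longrightarrow> length x = 9"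
  unfolding canon_def P0_def using distinct_card[of x] card_d by simp

lemma canon_chk: assumes "canon x" shows "chkB x"
proof -
  have ac9: "ac 9 [] [D1,D2,D3,D4,D5,D6,D7,D8,D9]" using allchk_top by (simp add: numeral_eq_Suc)
  have len: "length x = 9" using canon_len[OF assms] .
  have dx: "distinct x" and hx: "hd x = D1" using assms unfolding canon_def P0_def by auto
  have "\<forall>k<9. can_add (rev (take k x) @ []) (x ! k)"
  proof (intro allI impI)
    fix k :: nat assume k: "k < 9"
    have 1: "x ! k \<notin> set (rev (take k x))" using nth_notin_take[OF dx] k len by simp
    have 2: "rev (take k x) = [] \<longrightarrow> x ! k = D1"
    proof
      assume "rev (take k x) = []"
      then have "k = 0" using len k by auto
      then show "x ! k = D1" using hx len by (cases x) auto
    qed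
    have 3: "list_all (\<lambda>b. b \<in> set (rev (take k x))) (preds (x ! k))"
      unfolding list_all_iff
    proof
      fix b assume "b \<in> set (preds (x ! k))"
      then have "before x b (x ! k)" "b \<noteq> x ! k" using preds_before assms by blast+
      then show "b \<in> set (rev (take k x))" using before_take[OF dx] k len by simp
    qed
    show "can_add (rev (take k x) @ []) (x ! k)" unfolding can_add_def using 1 2 3 by simp
  qed
  then show ?thesis using ac_sound[OF ac9 len] by simp
qed

lemma len9: "length r = 9 \<Longrightarrow> r = [r!0, r!1, r!2, r!3, r!4, r!5, r!6, r!7, r!8]"
  by (rule nth_equalityI) (auto simp: less_Suc_eq numeral_eq_Suc)

lemma p_eq: assumes "length r = 9"
  shows "p2 r = prefix_rev 2 r \<and> p3 r = prefix_rev 3 r \<and> p4 r = prefix_rev 4 r \<and> p5 r = prefix_rev 5 r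
    \<and> p6 r = prefix_rev 6 r \<and> p7 r = prefix_rev 7 r \<and> p8 r = prefix_rev 8 r \<and> p9 r = prefix_rev 9 r"
proof -
  have "\<exists>a0 a1 a2 a3 a4 a5 a6 a7 a8. r = [a0,a1,a2,a3,a4,a5,a6,a7,a8]" using len9[OF assms] by blast
  then obtain a0 a1 a2 a3 a4 a5 a6 a7 a8 where "r = [a0,a1,a2,a3,a4,a5,a6,a7,a8]" by blast
  then show ?thesis by (simp add: prefix_rev_def)
qed

lemma chk_i: assumes "length r = 9" "chkB r" "2 \<le> i" "i \<le> 9" shows "chk2 r (prefix_rev i r)"
proof -
  have "i = 2 \<or> i = 3 \<or> i = 4 \<or> i = 5 \<or> i = 6 \<or> i = 7 \<or> i = 8 \<or> i = 9" using assms(3,4) by arith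
  moreover have "chk2 r (p2 r)" "chk2 r (p3 r)" "chk2 r (p4 r)" "chk2 r (p5 r)" "chk2 r (p6 r)"
    "chk2 r (p7 r)" "chk2 r (p8 r)" "chk2 r (p9 r)" using assms(2) unfolding chkB_def by auto
  moreover note p_eq[OF assms(1)]
  ultimately show ?thesis by (elim disjE) (simp_all only:)
qed

lemma prefix_rev_map: "map f (prefix_rev i x) = prefix_rev i (map f x)"
  by (simp add: prefix_rev_def rev_map take_map drop_map)

lemma prefix_rev_set: "set (prefix_rev i x) = set x"
  unfolding prefix_rev_def by (metis append_take_drop_id set_append set_rev)

lemma prefix_rev_distinct: "distinct (prefix_rev i x) = distinct x"
  unfolding prefix_rev_def by (metis append_take_drop_id distinct_append distinct_rev set_rev)

lemma P0_prefix_rev: "P0 x \<Longrightarrow> P0 (prefix_rev i x)"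
  unfolding P0_def by (simp add: prefix_rev_set prefix_rev_distinct)

definition H :: "d list \<Rightarrow> d \<Rightarrow> d" where "H x = (SOME h. inG h \<and> canon (map h x))"

lemma H_prop: assumes "P0 x" shows "inG (H x) \<and> canon (map (H x) x)"
proof -
  obtain h where h: "inG h" "alg (x, C0) = (map h x, psi h C0)" using alg_G by blast
  have "canon (fst (alg (x, C0)))" using alg_canon[OF assms] .
  with h have "\<exists>h. inG h \<and> canon (map h x)" by auto
  then show ?thesis unfolding H_def by (rule someI_ex)
qed

definition colour :: "d list \<Rightarrow> col" where
  "colour x = psi (inv (H x)) (Tab (map (H x) x))"

lemma colour_proper: assumes "P0 x" "2 \<le> i" "i \<le> 9" shows "colour x \<noteq> colour (prefix_rev i x)"
proof
  assume eq: "colour x = colour (prefix_rev i x)"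
  define x' where "x' = prefix_rev i x"
  have P': "P0 x'" unfolding x'_def using P0_prefix_rev[OF assms(1)] .
  define h where "h = H x"
  define h' where "h' = H x'"
  define r where "r = map h x"
  define r' where "r' = map h' x'"
  have hG: "inG h" "canon r" using H_prop[OF assms(1)] unfolding h_def r_def by auto
  have hG': "inG h'" "canon r'" using H_prop[OF P'] unfolding h'_def r'_def by auto
  have bh: "bij h" and bh': "bij h'" using hG(1) hG'(1) inG_bij by auto
  define y where "y = prefix_rev i r"
  have y: "y = map h x'" unfolding y_def r_def x'_def by (simp add: prefix_rev_map)
  have Py: "P0 y" unfolding y using P0_map[OF hG(1) P'] .
  obtain k where k: "inG k" "alg (y, Tab r) = (map k y, psi k (Tab r))" using alg_G by blast
  have ck: "canon (map k y)" using alg_canon[OF Py, of "Tab r"] k(2) by simp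
  have "chk2 r y" unfolding y_def using chk_i[OF canon_len[OF hG(2)] canon_chk[OF hG(2)] assms(2,3)] .
  then have chk: "psi k (Tab r) \<noteq> Tab (map k y)" unfolding chk2_def using k(2) by simp
  define m where "m = (k \<circ> h) \<circ> inv h'"
  have mG: "inG m" unfolding m_def using inG_comp inG_inv k(1) hG(1) hG'(1) by blast
  have ih': "inv h' \<circ> h' = id" using bij_is_inj[OF bh'] by (simp add: inj_iff)
  have sh': "h' \<circ> inv h' = id" using bij_is_surj[OF bh'] by (simp add: surj_iff)
  have sh: "h \<circ> inv h = id" using bij_is_surj[OF bh] by (simp add: surj_iff)
  have "m \<circ> h' = k \<circ> h" unfolding m_def by (simp add: comp_assoc ih')
  then have "map m r' = map k y" unfolding r'_def y by simp
  then have "canon (map m r')" using ck by simp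
  then have "m = id" using uniq[OF mG hG'(2)] by simp
  then have kh: "k \<circ> h = h'" using \<open>m \<circ> h' = k \<circ> h\<close> by simp
  have mk: "map k y = r'" unfolding y r'_def using kh by (simp flip: kh)
  have ix: "inG (inv h)" "inG (inv h')" using inG_inv hG(1) hG'(1) by auto
  have e1: "psi h' (colour x') = Tab r'"
    unfolding colour_def h'_def[symmetric] r'_def[symmetric]
    using psi_comp[OF hG'(1) ix(2)] sh' psi_id by metis
  have "h' \<circ> inv h = k" using kh sh by (metis comp_assoc comp_id)
  then have e2: "psi h' (colour x) = psi k (Tab r)"
    unfolding colour_def h_def[symmetric] r_def[symmetric]
    using psi_comp[OF hG'(1) ix(1)] by metis
  from eq have "psi h' (colour x) = psi h' (colour x')" unfolding x'_def by simp
  then have "psi k (Tab r) = Tab (map k y)" using e1 e2 mk by simp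
  with chk show False by simp
qed

definition tod :: "nat \<Rightarrow> d" where
  "tod n = (if n = 1 then D1 else if n = 2 then D2 else if n = 3 then D3 else if n = 4 then D4
    else if n = 5 then D5 else if n = 6 then D6 else if n = 7 then D7 else if n = 8 then D8 else D9)"

lemma nine: "{1..9::nat} = {1,2,3,4,5,6,7,8,9}" by auto

lemma tod_inj: "inj_on tod {1..9}"
  unfolding inj_on_def nine by (auto simp: tod_def)

lemma tod_img: "tod ` {1..9} = UNIV"
  unfolding nine by (simp add: tod_def UNIV_d insert_commute)

lemma tod_P0: assumes "p \<in> pancake_vertices 9" shows "P0 (map tod p)"
proof -
  have "distinct p" "set p = {1..9}" using assms unfolding pancake_vertices_def by auto
  then show ?thesis unfolding P0_def using tod_inj tod_img by (simp add: distinct_map)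
qed

fun colidx :: "col \<Rightarrow> nat" where
  "colidx C0 = 0" | "colidx C1 = 1" | "colidx C2 = 2" | "colidx C3 = 3"

lemma colidx_lt: "colidx c < 4" by (cases c) simp_all
lemma colidx_inj: "colidx a = colidx b \<Longrightarrow> a = b" by (cases a; cases b) simp_all

definition c9 :: "nat list \<Rightarrow> nat" where "c9 p = colidx (colour (map tod p))"

lemma c9_proper: "proper_colouring (pancake_vertices 9) (pancake_adj 9) 4 c9"
  unfolding proper_colouring_def
proof (intro conjI ballI impI)
  fix v show "c9 v < 4" unfolding c9_def by (rule colidx_lt)
next
  fix u v assume u: "u \<in> pancake_vertices 9" and "v \<in> pancake_vertices 9" and "pancake_adj 9 u v"
  then obtain i where i: "2 \<le> i" "i \<le> 9" "v = prefix_rev i u" unfolding pancake_adj_def by blast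
  have "map tod v = prefix_rev i (map tod u)" using i(3) by (simp add: prefix_rev_map)
  then have "colour (map tod u) \<noteq> colour (map tod v)" using colour_proper[OF tod_P0[OF u] i(1,2)] by simp
  then show "c9 u \<noteq> c9 v" unfolding c9_def using colidx_inj by blast
qed

lemma chi_le: "proper_colouring V E k c \<Longrightarrow> chromatic_number V E \<le> k"
  unfolding chromatic_number_def by (rule Least_le) blast

lemma chi_ex: "proper_colouring V E k c \<Longrightarrow> \<exists>c. proper_colouring V E (chromatic_number V E) c"
  unfolding chromatic_number_def by (rule LeastI_ex) blast

lemma chi9: "pancake_chi 9 \<le> 4"
  unfolding pancake_chi_def using chi_le[OF c9_proper] by simp

lemma pv_len: "p \<in> pancake_vertices n \<Longrightarrow> length p = n"
  unfolding pancake_vertices_def using distinct_card by fastforce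

lemma hd_prefix_rev: "1 \<le> i \<Longrightarrow> i \<le> length u \<Longrightarrow> hd (prefix_rev i u) = u ! (i - 1)"
proof -
  assume a: "1 \<le> i" "i \<le> length u"
  then have ne: "take i u \<noteq> []" by (cases u) auto
  have "hd (prefix_rev i u) = hd (rev (take i u))" unfolding prefix_rev_def using ne by simp
  also have "\<dots> = last (take i u)" using ne by (simp add: hd_rev)
  also have "\<dots> = take i u ! (i - 1)" using ne a by (simp add: last_conv_nth min_def)
  also have "\<dots> = u ! (i - 1)" using a by simp
  finally show ?thesis .
qed

lemma hd_col: assumes "1 \<le> n" shows "proper_colouring (pancake_vertices n) (pancake_adj n) (n+1) hd"
  unfolding proper_colouring_def
proof (intro conjI ballI impI)
  fix v assume v: "v \<in> pancake_vertices n"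
  then have "v \<noteq> []" "set v = {1..n}" using assms unfolding pancake_vertices_def by auto
  then have "hd v \<in> {1..n}" using hd_in_set by blast
  then show "hd v < n + 1" by simp
next
  fix u v assume u: "u \<in> pancake_vertices n" and "v \<in> pancake_vertices n" and "pancake_adj n u v"
  then obtain i where i: "2 \<le> i" "i \<le> n" "v = prefix_rev i u" unfolding pancake_adj_def by blast
  have l: "length u = n" using pv_len[OF u] .
  have d: "distinct u" using u unfolding pancake_vertices_def by simp
  have "hd v = u ! (i - 1)" using hd_prefix_rev[of i u] i l by simp
  moreover have "hd u = u ! 0" using l assms by (cases u) auto
  moreover have "u ! (i - 1) \<noteq> u ! 0" using d i l by (simp add: nth_eq_iff_index_eq)
  ultimately show "hd u \<noteq> hd v" by simp
qed

lemma pchi_col: "1 \<le> n \<Longrightarrow> \<exists>c. proper_colouring (pancake_vertices n) (pancake_adj n) (pancake_chi n) c"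
  unfolding pancake_chi_def using chi_ex[OF hd_col] by simp

lemma filter_prefix_rev:
  "filter P (prefix_rev i xs) = prefix_rev (length (filter P (take i xs))) (filter P xs)"
proof -
  have e: "filter P xs = filter P (take i xs) @ filter P (drop i xs)"
    by (metis append_take_drop_id filter_append)
  show ?thesis unfolding prefix_rev_def e by (simp add: rev_filter)
qed

lemma block_adj:
  assumes "distinct p" "2 \<le> i" "i \<le> length p" "P (p ! 0)" "P (p ! (i - 1))"
  shows "2 \<le> length (filter P (take i p)) \<and> length (filter P (take i p)) \<le> length (filter P p)"
proof
  have t0: "take i p ! 0 \<in> set (take i p)" by (rule nth_mem) (use assms in simp)
  have t1: "take i p ! (i - 1) \<in> set (take i p)" by (rule nth_mem) (use assms in simp)
  have "p ! 0 \<in> set (filter P (take i p))" using t0 assms by simp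
  moreover have "p ! (i - 1) \<in> set (filter P (take i p))" using t1 assms by simp
  ultimately have "p ! 0 \<in> set (filter P (take i p))" "p ! (i - 1) \<in> set (filter P (take i p))" by auto
  moreover have "p ! 0 \<noteq> p ! (i - 1)" using assms by (subst nth_eq_iff_index_eq) auto
  ultimately have "card {p ! 0, p ! (i - 1)} \<le> card (set (filter P (take i p)))"
    by (intro card_mono) auto
  also have "\<dots> \<le> length (filter P (take i p))" by (rule card_length)
  finally show "2 \<le> length (filter P (take i p))" using \<open>p ! 0 \<noteq> p ! (i - 1)\<close> by simp
next
  have "filter P p = filter P (take i p) @ filter P (drop i p)"
    by (metis append_take_drop_id filter_append)
  then show "length (filter P (take i p)) \<le> length (filter P p)" by (metis le_add1 length_append)
qed

lemma subadd: assumes "1 \<le> a" "1 \<le> b" shows "pancake_chi (a + b) \<le> pancake_chi a + pancake_chi b"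
proof -
  obtain ca where ca: "proper_colouring (pancake_vertices a) (pancake_adj a) (pancake_chi a) ca"
    using pchi_col[OF assms(1)] by blast
  obtain cb where cb: "proper_colouring (pancake_vertices b) (pancake_adj b) (pancake_chi b) cb"
    using pchi_col[OF assms(2)] by blast
  define ka where "ka = pancake_chi a"
  define kb where "kb = pancake_chi b"
  define FA where "FA = (\<lambda>p::nat list. filter (\<lambda>x. x \<le> a) p)"
  define FB where "FB = (\<lambda>p::nat list. map (\<lambda>x. x - a) (filter (\<lambda>x. a < x) p))"
  define f where "f = (\<lambda>p::nat list. if hd p \<le> a then ca (FA p) else ka + cb (FB p))"
  have FAv: "FA p \<in> pancake_vertices a" if "p \<in> pancake_vertices (a + b)" for p
    using that unfolding FA_def pancake_vertices_def by auto
  have FBv: "FB p \<in> pancake_vertices b" if "p \<in> pancake_vertices (a + b)" for p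
  proof -
    have d: "distinct p" and s: "set p = {1..a+b}" using that unfolding pancake_vertices_def by auto
    have "inj_on (\<lambda>x. x - a) (set (filter (\<lambda>x. a < x) p))" by (auto simp: inj_on_def)
    then have "distinct (FB p)" unfolding FB_def using d by (simp add: distinct_map)
    moreover have "set (FB p) = {1..b}"
    proof
      show "set (FB p) \<subseteq> {1..b}" unfolding FB_def using s by auto
      show "{1..b} \<subseteq> set (FB p)"
      proof
        fix y assume "y \<in> {1..b}"
        then have "y + a \<in> set (filter (\<lambda>x. a < x) p)" using s by auto
        then have "(y + a) - a \<in> set (FB p)" unfolding FB_def by (metis image_eqI set_map)
        then show "y \<in> set (FB p)" by simp
      qed
    qed
    ultimately show ?thesis unfolding pancake_vertices_def by simp
  qed
  have "proper_colouring (pancake_vertices (a + b)) (pancake_adj (a + b)) (ka + kb) f"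
    unfolding proper_colouring_def
  proof (intro conjI ballI impI)
    fix v assume v: "v \<in> pancake_vertices (a + b)"
    show "f v < ka + kb"
    proof (cases "hd v \<le> a")
      case True
      then have "f v = ca (FA v)" unfolding f_def by simp
      moreover have "ca (FA v) < ka" using ca FAv[OF v] unfolding proper_colouring_def ka_def by blast
      ultimately show ?thesis by simp
    next
      case False
      then have "f v = ka + cb (FB v)" unfolding f_def by simp
      moreover have "cb (FB v) < kb" using cb FBv[OF v] unfolding proper_colouring_def kb_def by blast
      ultimately show ?thesis by simp
    qed
  next
    fix u v assume u: "u \<in> pancake_vertices (a + b)" and v: "v \<in> pancake_vertices (a + b)"
      and "pancake_adj (a + b) u v"
    then obtain i where i: "2 \<le> i" "i \<le> a + b" "v = prefix_rev i u" unfolding pancake_adj_def by blast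
    have l: "length u = a + b" using pv_len[OF u] .
    have d: "distinct u" using u unfolding pancake_vertices_def by simp
    have hu: "hd u = u ! 0" using l assms by (cases u) auto
    have hv: "hd v = u ! (i - 1)" using hd_prefix_rev[of i u] i l by simp
    show "f u \<noteq> f v"
    proof (cases "hd u \<le> a")
      case hu1: True
      show ?thesis
      proof (cases "hd v \<le> a")
        case hv1: True
        define j where "j = length (filter (\<lambda>x. x \<le> a) (take i u))"
        have jb: "2 \<le> j \<and> j \<le> length (FA u)"
          unfolding j_def FA_def using block_adj[OF d i(1) _ , of "\<lambda>x. x \<le> a"] l i hu hv hu1 hv1 by simp
        have la: "length (FA u) = a" using pv_len[OF FAv[OF u]] .
        have "FA v = prefix_rev j (FA u)" unfolding FA_def j_def i(3) by (rule filter_prefix_rev)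
        then have "pancake_adj a (FA u) (FA v)" unfolding pancake_adj_def using jb la by auto
        then have "ca (FA u) \<noteq> ca (FA v)" using ca FAv[OF u] FAv[OF v] unfolding proper_colouring_def by blast
        then show ?thesis unfolding f_def using hu1 hv1 by simp
      next
        case hv1: False
        have "ca (FA u) < ka" using ca FAv[OF u] unfolding proper_colouring_def ka_def by blast
        then show ?thesis unfolding f_def using hu1 hv1 by simp
      qed
    next
      case hu1: False
      show ?thesis
      proof (cases "hd v \<le> a")
        case hv1: True
        have "ca (FA v) < ka" using ca FAv[OF v] unfolding proper_colouring_def ka_def by blast
        then show ?thesis unfolding f_def using hu1 hv1 by simp
      next
        case hv1: False
        define j where "j = length (filter (\<lambda>x. a < x) (take i u))"
        have jb: "2 \<le> j \<and> j \<le> length (filter (\<lambda>x. a < x) u)"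
          unfolding j_def using block_adj[OF d i(1) _ , of "\<lambda>x. a < x"] l i hu hv hu1 hv1 by simp
        have lb: "length (FB u) = b" using pv_len[OF FBv[OF u]] .
        have "FB v = prefix_rev j (FB u)"
          unfolding FB_def j_def i(3) by (simp add: filter_prefix_rev prefix_rev_map)
        then have "pancake_adj b (FB u) (FB v)" unfolding pancake_adj_def using jb lb
          unfolding FB_def by auto
        then have "cb (FB u) \<noteq> cb (FB v)" using cb FBv[OF u] FBv[OF v] unfolding proper_colouring_def by blast
        then show ?thesis unfolding f_def using hu1 hv1 by simp
      qed
    qed
  qed
  then have "chromatic_number (pancake_vertices (a + b)) (pancake_adj (a + b)) \<le> ka + kb" by (rule chi_le)
  then show ?thesis unfolding ka_def kb_def using assms by (simp add: pancake_chi_def[of "a + b"])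
qed

lemma main_k: "\<forall>m<9. pancake_chi (9 * Suc k + m) \<le> 4 * Suc k + pancake_chi m"
proof (induction k)
  case 0
  show ?case
  proof (intro allI impI)
    fix m :: nat assume "m < 9"
    show "pancake_chi (9 * Suc 0 + m) \<le> 4 * Suc 0 + pancake_chi m"
    proof (cases "m = 0")
      case True then show ?thesis using chi9 by simp
    next
      case False
      then have "pancake_chi (9 + m) \<le> pancake_chi 9 + pancake_chi m" using subadd[of 9 m] by simp
      then show ?thesis using chi9 by simp
    qed
  qed
next
  case (Suc k)
  show ?case
  proof (intro allI impI)
    fix m :: nat assume m: "m < 9"
    have eq: "pancake_chi (9 * Suc (Suc k) + m) = pancake_chi (9 + (9 * Suc k + m))"
      by (rule arg_cong[where f=pancake_chi]) simp
    have "pancake_chi (9 + (9 * Suc k + m)) \<le> pancake_chi 9 + pancake_chi (9 * Suc k + m)"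
      by (rule subadd) simp_all
    then have "pancake_chi (9 * Suc (Suc k) + m) \<le> pancake_chi 9 + pancake_chi (9 * Suc k + m)"
      using eq by simp
    also have "\<dots> \<le> 4 + (4 * Suc k + pancake_chi m)" using chi9 Suc.IH m by (meson add_mono)
    finally show "pancake_chi (9 * Suc (Suc k) + m) \<le> 4 * Suc (Suc k) + pancake_chi m" by simp
  qed
qed

theorem theorem1:
  fixes n :: nat
  assumes "n \<ge> 9"
  shows "pancake_chi n \<le> 4 * (n div 9) + pancake_chi (n mod 9)"
proof -
  obtain k where k: "n div 9 = Suc k" using assms by (cases "n div 9") auto
  have "n = 9 * Suc k + n mod 9" using k by (metis div_mult_mod_eq mult.commute)
  then have "pancake_chi n = pancake_chi (9 * Suc k + n mod 9)" by simp
  also have "\<dots> \<le> 4 * Suc k + pancake_chi (n mod 9)" using main_k by simp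
  finally show ?thesis using k by simp
qed

end
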